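(* Let $X$ be a compact metric space with metric $d$, let $f\colon X\to X$ be a continuous map with the s-limit shadowing property, let $C\in\mathcal{C}(f)$ and $D,E\in\mathcal{D}(C)$. Then for any $n\ge1$, any $x_1,\dots,x_n\in V^s(D)$, any $y_1,\dots,y_n\in\overline{V^s(E)}$, and any $\epsilon>0$, there are $z_1,\dots,z_n\in\overline{V^s(E)}$ and integers $K,L\ge0$ such that $d(y_j,z_j)\le\epsilon$ for all $1\le j\le n$, and $d(f^{K+i}(x_j),f^{L+i}(z_j))\le\epsilon$ for all $1\le j\le n$ and all $i\ge0$.
   Context: A $\delta$-chain of $f$ ($\delta>0$) is a finite sequence $(x_i)_{i=0}^k$, $k\ge1$, with $d(f(x_i),x_{i+1})\le\delta$ for $0\le i\le k-1$; it is a $\delta$-cycle if $x_0=x_k$, with length $k$. Write $x\to y$ if for every $\delta>0$ there is a $\delta$-chain from $x$ to $y$. Let $CR(f)=\{x\colon x\to x\}$; on $CR(f)$ let $x\leftrightarrow y$ iff $x\to y$ and $y\to x$; its classes are the chain components, forming $\mathcal{C}(f)$. For $C\in\mathcal{C}(f)$, $\delta>0$, let $m=m(C,\delta)$ be the gcd of the lengths of all $\delta$-cycles of $f|_C$, and for $x,y\in C$ let $x\sim_{C,\delta}y$ iff there is a $\delta$-chain of $f|_C$ from $x$ to $y$ of length divisible by $m$; $\mathcal{D}(C,\delta)$ is the set of its equivalence classes. Let $x\sim_C y$ iff $x\sim_{C,\delta}y$ for all $\delta>0$; $\mathcal{D}(C)$ is its set of classes. For $D\in\mathcal{D}(C)$,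 $D_\delta$ is the element of $\mathcal{D}(C,\delta)$ containing $D$. $W^s(C)=\{x\colon\lim_i d(f^i(x),C)=0\}$ and $V^s(D)=\bigcap_{\delta>0}\{x\in W^s(C)\colon\lim_i d(f^i(x),f^i(D_\delta))=0\}$; $\overline{V^s(E)}$ denotes the closure in $X$. $f$ has the s-limit shadowing property if for every $\epsilon>0$ there is $\delta>0$ such that for every sequence $(x_i)_{i\ge0}$ with $d(f(x_i),x_{i+1})\le\delta$ for all $i$ and $d(f(x_i),x_{i+1})\to0$ there is $x\in X$ with $d(f^i(x),x_i)\le\epsilon$ for all $i$ and $d(f^i(x),x_i)\to0$. *)

theory Defs
  imports "HOL-Analysis.Analysis"
begin

definition is_chain :: "('a::metric_space \<Rightarrow> 'a) \<Rightarrow> real \<Rightarrow> (nat \<Rightarrow> 'a) \<Rightarrow> nat \<Rightarrow> bool" where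
  "is_chain f \<delta> xi k \<longleftrightarrow> k \<ge> 1 \<and> (\<forall>i<k. dist (f (xi i)) (xi (Suc i)) \<le> \<delta>)"

definition chain_to :: "('a::metric_space \<Rightarrow> 'a) \<Rightarrow> 'a \<Rightarrow> 'a \<Rightarrow> bool" where
  "chain_to f x y \<longleftrightarrow> (\<forall>\<delta>>0. \<exists>xi k. is_chain f \<delta> xi k \<and> xi 0 = x \<and> xi k = y)"

definition CR :: "('a::metric_space \<Rightarrow> 'a) \<Rightarrow> 'a set" where
  "CR f = {x. chain_to f x x}"

definition chain_components :: "('a::metric_space \<Rightarrow> 'a) \<Rightarrow> 'a set set" where
  "chain_components f =
     {C. \<exists>x\<in>CR f. C = {y \<in> CR f. chain_to f x y \<and> chain_to f y x}}"

definition period :: "('a::metric_space \<Rightarrow> 'a) \<Rightarrow> 'a set \<Rightarrow> real \<Rightarrow> nat" where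
  "period f C \<delta> = Gcd {k. \<exists>xi. is_chain f \<delta> xi k \<and> (\<forall>i\<le>k. xi i \<in> C) \<and> xi 0 = xi k}"

definition rel_delta :: "('a::metric_space \<Rightarrow> 'a) \<Rightarrow> 'a set \<Rightarrow> real \<Rightarrow> 'a \<Rightarrow> 'a \<Rightarrow> bool" where
  "rel_delta f C \<delta> x y \<longleftrightarrow> x \<in> C \<and> y \<in> C \<and>
     (\<exists>xi k. is_chain f \<delta> xi k \<and> (\<forall>i\<le>k. xi i \<in> C) \<and> xi 0 = x \<and> xi k = y
            \<and> period f C \<delta> dvd k)"

definition classes_delta :: "('a::metric_space \<Rightarrow> 'a) \<Rightarrow> 'a set \<Rightarrow> real \<Rightarrow> 'a set set" where
  "classes_delta f C \<delta> = {D. \<exists>x\<in>C. D = {y. rel_delta f C \<delta> x y}}"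

definition rel_C :: "('a::metric_space \<Rightarrow> 'a) \<Rightarrow> 'a set \<Rightarrow> 'a \<Rightarrow> 'a \<Rightarrow> bool" where
  "rel_C f C x y \<longleftrightarrow> (\<forall>\<delta>>0. rel_delta f C \<delta> x y)"

definition classes :: "('a::metric_space \<Rightarrow> 'a) \<Rightarrow> 'a set \<Rightarrow> 'a set set" where
  "classes f C = {D. \<exists>x\<in>C. D = {y \<in> C. rel_C f C x y}}"

definition class_delta :: "('a::metric_space \<Rightarrow> 'a) \<Rightarrow> 'a set \<Rightarrow> 'a set \<Rightarrow> real \<Rightarrow> 'a set" where
  "class_delta f C D \<delta> = (THE E. E \<in> classes_delta f C \<delta> \<and> D \<subseteq> E)"

definition Ws :: "('a::metric_space \<Rightarrow> 'a) \<Rightarrow> 'a set \<Rightarrow> 'a set" where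
  "Ws f C = {x. (\<lambda>i. infdist ((f ^^ i) x) C) \<longlonglongrightarrow> 0}"

definition Vs :: "('a::metric_space \<Rightarrow> 'a) \<Rightarrow> 'a set \<Rightarrow> 'a set \<Rightarrow> 'a set" where
  "Vs f C D = (\<Inter>\<delta>\<in>{\<delta>::real. \<delta> > 0}.
     {x \<in> Ws f C. (\<lambda>i. infdist ((f ^^ i) x) ((f ^^ i) ` class_delta f C D \<delta>)) \<longlonglongrightarrow> 0})"

definition s_limit_shadowing :: "('a::metric_space \<Rightarrow> 'a) \<Rightarrow> bool" where
  "s_limit_shadowing f \<longleftrightarrow>
    (\<forall>\<epsilon>>0. \<exists>\<delta>>0. \<forall>xs :: nat \<Rightarrow> 'a.
       (\<forall>i. dist (f (xs i)) (xs (Suc i)) \<le> \<delta>) \<and> (\<lambda>i. dist (f (xs i)) (xs (Suc i))) \<longlonglongrightarrow> 0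
       \<longrightarrow> (\<exists>x. (\<forall>i. dist ((f ^^ i) x) (xs i) \<le> \<epsilon>) \<and> (\<lambda>i. dist ((f ^^ i) x) (xs i)) \<longlonglongrightarrow> 0))"

end

theory Submission
  imports Defs
begin


definition cat :: "(nat \<Rightarrow> 'a) \<Rightarrow> nat \<Rightarrow> (nat \<Rightarrow> 'a) \<Rightarrow> nat \<Rightarrow> 'a" where
  "cat \<xi> k \<zeta> = (\<lambda>i. if i \<le> k then \<xi> i else \<zeta> (i - k))"

lemma cat_0[simp]: "cat \<xi> k \<zeta> 0 = \<xi> 0" by (simp add: cat_def)
lemma cat_end: "\<xi> k = \<zeta> 0 \<Longrightarrow> cat \<xi> k \<zeta> (k + t) = \<zeta> t"
  by (auto simp: cat_def)
lemma cat_le: "i \<le> k \<Longrightarrow> cat \<xi> k \<zeta> i = \<xi> i" by (simp add: cat_def)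

lemma cat_steps:
  assumes "\<forall>i<k. dist (f (\<xi> i)) (\<xi> (Suc i)) \<le> d"
    and "\<forall>i<l. dist (f (\<zeta> i)) (\<zeta> (Suc i)) \<le> d"
    and "\<xi> k = \<zeta> 0"
  shows "\<forall>i<k+l. dist (f (cat \<xi> k \<zeta> i)) (cat \<xi> k \<zeta> (Suc i)) \<le> d"
proof (intro allI impI)
  fix i assume i: "i < k + l"
  show "dist (f (cat \<xi> k \<zeta> i)) (cat \<xi> k \<zeta> (Suc i)) \<le> d"
  proof (cases "i < k")
    case True thus ?thesis using assms(1) by (simp add: cat_def)
  next
    case False
    define t where "t = i - k"
    have t: "i = k + t" "t < l" using i False by (auto simp: t_def)
    have "cat \<xi> k \<zeta> i = \<zeta> t" using t assms(3) cat_end by simp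
    moreover have "cat \<xi> k \<zeta> (Suc i) = \<zeta> (Suc t)" using t assms(3) cat_end[of \<xi> k \<zeta> "Suc t"] by simp
    ultimately show ?thesis using assms(2) t by simp
  qed
qed

lemma chain_cat:
  assumes "is_chain f d \<xi> k" "is_chain f d \<zeta> l" "\<xi> k = \<zeta> 0"
  shows "is_chain f d (cat \<xi> k \<zeta>) (k + l)" "cat \<xi> k \<zeta> (k + l) = \<zeta> l"
proof -
  have h: "k \<ge> 1" "\<forall>i<k. dist (f (\<xi> i)) (\<xi> (Suc i)) \<le> d" "\<forall>i<l. dist (f (\<zeta> i)) (\<zeta> (Suc i)) \<le> d"
    using assms(1,2) unfolding is_chain_def by blast+
  show "is_chain f d (cat \<xi> k \<zeta>) (k + l)" unfolding is_chain_def
    using cat_steps[OF h(2) h(3) assms(3)] h(1) by simp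
  show "cat \<xi> k \<zeta> (k + l) = \<zeta> l" using cat_end[of \<xi> k \<zeta> l] assms(3) by simp
qed

lemma cat_in:
  assumes "\<forall>i\<le>k. \<xi> i \<in> S" "\<forall>i\<le>l. \<zeta> i \<in> S"
  shows "\<forall>i\<le>k+l. cat \<xi> k \<zeta> i \<in> S"
proof (intro allI impI)
  fix i assume "i \<le> k + l"
  show "cat \<xi> k \<zeta> i \<in> S"
  proof (cases "i \<le> k")
    case True then show ?thesis using assms(1) by (simp add: cat_def)
  next
    case False
    then have "i - k \<le> l" using \<open>i \<le> k + l\<close> by simp
    then show ?thesis using assms(2) False by (simp add: cat_def)
  qed
qed

lemma chain_mono: "is_chain f d \<xi> k \<Longrightarrow> d \<le> d' \<Longrightarrow> is_chain f d' \<xi> k"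
  unfolding is_chain_def using order_trans by blast

lemma chain_to_trans:
  assumes "chain_to f x y" "chain_to f y z"
  shows "chain_to f x z"
  unfolding chain_to_def
proof (intro allI impI)
  fix d :: real assume "d > 0"
  obtain \<xi> k where h1: "is_chain f d \<xi> k" "\<xi> 0 = x" "\<xi> k = y"
    using assms(1) \<open>d > 0\<close> unfolding chain_to_def by blast
  obtain \<zeta> l where h2: "is_chain f d \<zeta> l" "\<zeta> 0 = y" "\<zeta> l = z"
    using assms(2) \<open>d > 0\<close> unfolding chain_to_def by blast
  have "\<xi> k = \<zeta> 0" using h1 h2 by simp
  note c = chain_cat[OF h1(1) h2(1) this]
  have "cat \<xi> k \<zeta> 0 = x" using h1 by simp
  then show "\<exists>\<xi> k. is_chain f d \<xi> k \<and> \<xi> 0 = x \<and> \<xi> k = z"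
    using c h2(3) by blast
qed

lemma chain_prefix: "is_chain f d \<xi> k \<Longrightarrow> 1 \<le> i \<Longrightarrow> i \<le> k \<Longrightarrow> is_chain f d \<xi> i"
  unfolding is_chain_def by simp

lemma chain_suffix:
  assumes "is_chain f d \<xi> k" "i < k"
  shows "is_chain f d (\<lambda>t. \<xi> (i + t)) (k - i)"
  unfolding is_chain_def
proof (intro conjI allI impI)
  show "1 \<le> k - i" using assms by simp
  fix t assume "t < k - i"
  then have "i + t < k" by simp
  then show "dist (f (\<xi> (i + t))) (\<xi> (i + Suc t)) \<le> d" using assms(1) unfolding is_chain_def by simp
qed

lemma chain_upd0:
  assumes "is_chain f d \<xi> k" "dist (f a) (f (\<xi> 0)) \<le> e"
  shows "is_chain f (d + e) (\<xi>(0 := a)) k"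
  unfolding is_chain_def
proof (intro conjI allI impI)
  show "1 \<le> k" using assms by (simp add: is_chain_def)
  fix i assume "i < k"
  show "dist (f ((\<xi>(0 := a)) i)) ((\<xi>(0 := a)) (Suc i)) \<le> d + e"
  proof (cases "i = 0")
    case True
    have "dist (f a) (\<xi> 1) \<le> dist (f a) (f (\<xi> 0)) + dist (f (\<xi> 0)) (\<xi> 1)" by (rule dist_triangle)
    also have "\<dots> \<le> e + d" using assms \<open>i < k\<close> True by (auto simp: is_chain_def intro!: add_mono)
    finally show ?thesis using True by simp
  next
    case False
    have "e \<ge> 0" using assms(2) zero_le_dist order_trans by blast
    moreover have "dist (f (\<xi> i)) (\<xi> (Suc i)) \<le> d" using assms(1) \<open>i < k\<close> by (simp add: is_chain_def)
    ultimately show ?thesis using False by simp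
  qed
qed

lemma chain_updk:
  assumes "is_chain f d \<xi> k" "dist b (\<xi> k) \<le> e"
  shows "is_chain f (d + e) (\<xi>(k := b)) k"
  unfolding is_chain_def
proof (intro conjI allI impI)
  show "1 \<le> k" using assms by (simp add: is_chain_def)
  fix i assume "i < k"
  show "dist (f ((\<xi>(k := b)) i)) ((\<xi>(k := b)) (Suc i)) \<le> d + e"
  proof (cases "Suc i = k")
    case True
    have "dist (f (\<xi> i)) b \<le> dist (f (\<xi> i)) (\<xi> k) + dist (\<xi> k) b" by (rule dist_triangle)
    also have "\<dots> \<le> d + e" using assms \<open>i < k\<close> True by (auto simp: is_chain_def dist_commute intro!: add_mono)
    finally show ?thesis using True by simp
  next
    case False
    have "e \<ge> 0" using assms(2) zero_le_dist order_trans by blast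
    moreover have "dist (f (\<xi> i)) (\<xi> (Suc i)) \<le> d" using assms(1) \<open>i < k\<close> by (simp add: is_chain_def)
    ultimately show ?thesis using False \<open>i < k\<close> by simp
  qed
qed

lemma infdist_lessE:
  assumes "infdist x A < e" "A \<noteq> {}"
  obtains a where "a \<in> A" "dist x a < e"
  using assms by (auto simp: infdist_notempty cINF_less_iff)

lemma uc_f:
  assumes "compact (UNIV :: 'a::metric_space set)" "continuous_on UNIV (f :: 'a \<Rightarrow> 'a)" "e > 0"
  shows "\<exists>d>0. \<forall>x y. dist x y < d \<longrightarrow> dist (f x) (f y) < e"
proof -
  have "uniformly_continuous_on UNIV f" using assms compact_uniformly_continuous by blast
  then obtain d where "d > 0" "\<forall>x\<in>UNIV. \<forall>x'\<in>UNIV. dist x' x < d \<longrightarrow> dist (f x') (f x) < e"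
    using assms(3) unfolding uniformly_continuous_on_def by blast
  then show ?thesis by auto
qed

lemma finite_net:
  assumes "compact (UNIV :: 'a::metric_space set)" "e > 0"
  shows "\<exists>P. finite P \<and> P \<subseteq> (S::'a set) \<and> (\<forall>c\<in>S. \<exists>p\<in>P. dist c p < e)"
proof -
  obtain k where k: "finite k" "(UNIV::'a set) \<subseteq> (\<Union>x\<in>k. ball x (e/2))"
  proof -
    have "seq_compact (UNIV::'a set)" using assms compact_imp_seq_compact by blast
    from seq_compact_imp_totally_bounded[OF this] assms(2)
    show ?thesis using that by (meson half_gt_zero)
  qed
  define g where "g x = (SOME c. c \<in> S \<and> dist x c < e/2)" for x
  define P where "P = g ` {x\<in>k. \<exists>c\<in>S. dist x c < e/2}"
  have "finite P" using k(1) by (simp add: P_def)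
  moreover have "P \<subseteq> S" unfolding P_def g_def by (auto intro: someI2_ex)
  moreover have "\<forall>c\<in>S. \<exists>p\<in>P. dist c p < e"
  proof
    fix c assume c: "c \<in> S"
    obtain x where x: "x \<in> k" "dist x c < e/2" using k(2) by (auto simp: ball_def)
    then have gx: "g x \<in> S \<and> dist x (g x) < e/2" unfolding g_def using c by (auto intro: someI2_ex)
    have "g x \<in> P" using x c by (auto simp: P_def)
    moreover have "dist c (g x) < e" using gx x dist_triangle[of c "g x" x]
      by (simp add: dist_commute)
    ultimately show "\<exists>p\<in>P. dist c p < e" by blast
  qed
  ultimately show ?thesis by blast
qed


lemma chain_to_step: "chain_to f a (f a)"
  unfolding chain_to_def
proof (intro allI impI)
  fix d :: real assume "d > 0"
  let ?\<xi> = "\<lambda>i::nat. if i = 0 then a else f a"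
  have "is_chain f d ?\<xi> 1" using \<open>d > 0\<close> by (auto simp: is_chain_def)
  moreover have "?\<xi> 0 = a" "?\<xi> 1 = f a" by simp_all
  ultimately show "\<exists>\<xi> k. is_chain f d \<xi> k \<and> \<xi> 0 = a \<and> \<xi> k = f a" by blast
qed

lemma ev_ex: "eventually P sequentially \<Longrightarrow> \<exists>n. P n"
  unfolding eventually_sequentially by auto

locale cc =
  fixes f :: "'a::metric_space \<Rightarrow> 'a" and C :: "'a set"
  assumes cpt: "compact (UNIV::'a set)" and cont: "continuous_on UNIV f"
    and comp: "C \<in> chain_components f"
begin

definition c0 where "c0 = (SOME x. x \<in> CR f \<and> C = {y \<in> CR f. chain_to f x y \<and> chain_to f y x})"

lemma c0: "c0 \<in> CR f" "C = {y \<in> CR f. chain_to f c0 y \<and> chain_to f y c0}"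
proof -
  have "\<exists>x. x \<in> CR f \<and> C = {y \<in> CR f. chain_to f x y \<and> chain_to f y x}"
    using comp by (auto simp: chain_components_def)
  from someI_ex[OF this] have "c0 \<in> CR f \<and> C = {y \<in> CR f. chain_to f c0 y \<and> chain_to f y c0}"
    unfolding c0_def .
  then show "c0 \<in> CR f" "C = {y \<in> CR f. chain_to f c0 y \<and> chain_to f y c0}" by simp_all
qed

lemma C_iff: "a \<in> C \<longleftrightarrow> chain_to f c0 a \<and> chain_to f a c0"
proof
  assume "a \<in> C" then have "a \<in> {y \<in> CR f. chain_to f c0 y \<and> chain_to f y c0}" using c0(2) by simp
  then show "chain_to f c0 a \<and> chain_to f a c0" by simp
next
  assume h: "chain_to f c0 a \<and> chain_to f a c0"
  then have "chain_to f a a" using chain_to_trans by blast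
  then have "a \<in> CR f" by (simp add: CR_def)
  then have "a \<in> {y \<in> CR f. chain_to f c0 y \<and> chain_to f y c0}" using h by simp
  then show "a \<in> C" using c0(2) by simp
qed

lemma c0_in: "c0 \<in> C" using c0(1) C_iff by (simp add: CR_def)

lemma C_ne: "C \<noteq> {}" using c0_in by blast

lemma uc: "e > 0 \<Longrightarrow> \<exists>d>0. \<forall>x y. dist x y < d \<longrightarrow> dist (f x) (f y) < e"
  using uc_f[OF cpt cont] by blast

lemma inv: assumes "a \<in> C" shows "f a \<in> C"
proof -
  have "chain_to f (f a) a"
    unfolding chain_to_def
  proof (intro allI impI)
    fix d :: real assume "d > 0"
    obtain r where r: "r > 0" "\<forall>x y. dist x y < r \<longrightarrow> dist (f x) (f y) < d/2"
      using uc[of "d/2"] \<open>d > 0\<close> by auto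
    define r' where "r' = min (r/2) (d/2)"
    have "r' > 0" using r \<open>d>0\<close> by (simp add: r'_def)
    have "chain_to f c0 a" "chain_to f a c0" using assms C_iff by auto
    then have "chain_to f a a" using chain_to_trans by blast
    then obtain \<xi> k where xi: "is_chain f r' \<xi> k" "\<xi> 0 = a" "\<xi> k = a"
      using \<open>r' > 0\<close> unfolding chain_to_def by blast
    define \<xi>2 where "\<xi>2 = cat \<xi> k \<xi>"
    have c2: "is_chain f r' \<xi>2 (k + k)" "\<xi>2 (k + k) = a" "\<xi>2 0 = a"
      using chain_cat[OF xi(1) xi(1)] xi by (auto simp: \<xi>2_def)
    have k1: "k \<ge> 1" using xi by (simp add: is_chain_def)
    define \<zeta> where "\<zeta> = (\<lambda>t. \<xi>2 (1 + t))"
    have cz: "is_chain f r' \<zeta> (k + k - 1)" unfolding \<zeta>_def using chain_suffix[OF c2(1), of 1] k1 by simp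
    have "dist (f (\<xi>2 0)) (\<xi>2 1) \<le> r'" using c2(1) k1 by (auto simp: is_chain_def)
    then have "dist (f a) (\<zeta> 0) < r" using c2 r'_def r by (simp add: \<zeta>_def)
    then have "dist (f (f a)) (f (\<zeta> 0)) \<le> d/2" using r by (simp add: less_imp_le)
    from chain_upd0[OF cz this] have "is_chain f (r' + d/2) (\<zeta>(0 := f a)) (k + k - 1)" .
    moreover have "r' + d/2 \<le> d" by (simp add: r'_def)
    ultimately have "is_chain f d (\<zeta>(0 := f a)) (k + k - 1)" by (rule chain_mono)
    moreover have "(\<zeta>(0 := f a)) (k + k - 1) = a" using k1 c2 by (simp add: \<zeta>_def)
    moreover have "(\<zeta>(0 := f a)) 0 = f a" by simp
    ultimately show "\<exists>\<xi> k. is_chain f d \<xi> k \<and> \<xi> 0 = f a \<and> \<xi> k = a" by blast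
  qed
  moreover have "chain_to f c0 a" "chain_to f a c0" using assms C_iff by auto
  moreover have "chain_to f a (f a)" by (rule chain_to_step)
  ultimately have "chain_to f c0 (f a)" "chain_to f (f a) c0" using chain_to_trans by blast+
  then show ?thesis using C_iff by blast
qed

lemma inv_pow: "a \<in> C \<Longrightarrow> (f ^^ i) a \<in> C"
  by (induction i) (auto intro: inv)

lemma key:
  assumes "a \<in> C" "\<eta> > 0"
  shows "\<exists>e>0. \<forall>q. (\<exists>\<xi> k. is_chain f e \<xi> k \<and> \<xi> 0 = a \<and> \<xi> k = q) \<and>
                   (\<exists>\<xi> k. is_chain f e \<xi> k \<and> \<xi> 0 = q \<and> \<xi> k = a) \<longrightarrow> infdist q C < \<eta>"
proof (rule ccontr)
  assume nt: "\<not> ?thesis"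
  have H: "\<forall>e>0. \<exists>q. (\<exists>\<xi> k. is_chain f e \<xi> k \<and> \<xi> 0 = a \<and> \<xi> k = q) \<and>
                   (\<exists>\<xi> k. is_chain f e \<xi> k \<and> \<xi> 0 = q \<and> \<xi> k = a) \<and> \<not> infdist q C < \<eta>"
  proof (intro allI impI)
    fix e :: real assume "e > 0"
    show "\<exists>q. (\<exists>\<xi> k. is_chain f e \<xi> k \<and> \<xi> 0 = a \<and> \<xi> k = q) \<and>
                   (\<exists>\<xi> k. is_chain f e \<xi> k \<and> \<xi> 0 = q \<and> \<xi> k = a) \<and> \<not> infdist q C < \<eta>"
    proof (rule ccontr)
      assume nq: "\<not> (\<exists>q. (\<exists>\<xi> k. is_chain f e \<xi> k \<and> \<xi> 0 = a \<and> \<xi> k = q) \<and>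
                   (\<exists>\<xi> k. is_chain f e \<xi> k \<and> \<xi> 0 = q \<and> \<xi> k = a) \<and> \<not> infdist q C < \<eta>)"
      then have "\<forall>q. (\<exists>\<xi> k. is_chain f e \<xi> k \<and> \<xi> 0 = a \<and> \<xi> k = q) \<and>
                   (\<exists>\<xi> k. is_chain f e \<xi> k \<and> \<xi> 0 = q \<and> \<xi> k = a) \<longrightarrow> infdist q C < \<eta>"
      proof (intro allI impI)
        fix q assume hq: "(\<exists>\<xi> k. is_chain f e \<xi> k \<and> \<xi> 0 = a \<and> \<xi> k = q) \<and>
                   (\<exists>\<xi> k. is_chain f e \<xi> k \<and> \<xi> 0 = q \<and> \<xi> k = a)"
        show "infdist q C < \<eta>"
        proof (rule ccontr)
          assume "\<not> infdist q C < \<eta>"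
          with hq have "(\<exists>\<xi> k. is_chain f e \<xi> k \<and> \<xi> 0 = a \<and> \<xi> k = q) \<and>
                   (\<exists>\<xi> k. is_chain f e \<xi> k \<and> \<xi> 0 = q \<and> \<xi> k = a) \<and> \<not> infdist q C < \<eta>" by simp
          then have "\<exists>q. (\<exists>\<xi> k. is_chain f e \<xi> k \<and> \<xi> 0 = a \<and> \<xi> k = q) \<and>
                   (\<exists>\<xi> k. is_chain f e \<xi> k \<and> \<xi> 0 = q \<and> \<xi> k = a) \<and> \<not> infdist q C < \<eta>"
            by (rule exI[of _ q])
          with nq show False by contradiction
        qed
      qed
      with \<open>e > 0\<close> have "\<exists>e>0. \<forall>q. (\<exists>\<xi> k. is_chain f e \<xi> k \<and> \<xi> 0 = a \<and> \<xi> k = q) \<and>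
                   (\<exists>\<xi> k. is_chain f e \<xi> k \<and> \<xi> 0 = q \<and> \<xi> k = a) \<longrightarrow> infdist q C < \<eta>"
        by (intro exI[of _ e] conjI)
      then show False using nt by contradiction
    qed
  qed
  have "\<forall>n::nat. \<exists>q. (\<exists>\<xi> k. is_chain f (1/(Suc n)) \<xi> k \<and> \<xi> 0 = a \<and> \<xi> k = q) \<and>
                   (\<exists>\<xi> k. is_chain f (1/(Suc n)) \<xi> k \<and> \<xi> 0 = q \<and> \<xi> k = a) \<and> \<not> infdist q C < \<eta>"
  proof
    fix n :: nat
    have "(1::real)/(Suc n) > 0" by simp
    then show "\<exists>q. (\<exists>\<xi> k. is_chain f (1/(Suc n)) \<xi> k \<and> \<xi> 0 = a \<and> \<xi> k = q) \<and>
                   (\<exists>\<xi> k. is_chain f (1/(Suc n)) \<xi> k \<and> \<xi> 0 = q \<and> \<xi> k = a) \<and> \<not> infdist q C < \<eta>"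
      by (rule H[rule_format])
  qed
  then have "\<exists>q. \<forall>n::nat. (\<exists>\<xi> k. is_chain f (1/(Suc n)) \<xi> k \<and> \<xi> 0 = a \<and> \<xi> k = q n) \<and>
                   (\<exists>\<xi> k. is_chain f (1/(Suc n)) \<xi> k \<and> \<xi> 0 = q n \<and> \<xi> k = a) \<and> \<not> infdist (q n) C < \<eta>"
    by (rule choice)
  then obtain q where q0: "\<forall>n::nat. (\<exists>\<xi> k. is_chain f (1/(Suc n)) \<xi> k \<and> \<xi> 0 = a \<and> \<xi> k = q n) \<and>
                   (\<exists>\<xi> k. is_chain f (1/(Suc n)) \<xi> k \<and> \<xi> 0 = q n \<and> \<xi> k = a) \<and> \<not> infdist (q n) C < \<eta>"
    by (rule exE)
  have q: "\<And>n. (\<exists>\<xi> k. is_chain f (1/(Suc n)) \<xi> k \<and> \<xi> 0 = a \<and> \<xi> k = q n)"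
    "\<And>n. (\<exists>\<xi> k. is_chain f (1/(Suc n)) \<xi> k \<and> \<xi> 0 = q n \<and> \<xi> k = a)" "\<And>n. infdist (q n) C \<ge> \<eta>"
    using q0 by (simp_all add: not_less)
  obtain l r where lr: "strict_mono r" "(q \<circ> r) \<longlonglongrightarrow> l"
    using compact_imp_seq_compact[OF cpt] unfolding seq_compact_def by blast
  have ev: "\<forall>\<^sub>F n in sequentially. dist (q (r n)) l < e" if "e > 0" for e
    using lr(2) that unfolding tendsto_iff by (simp add: o_def)
  have ev2: "\<forall>\<^sub>F n in sequentially. 1 / real (Suc (r n)) \<le> e" if e0: "e > 0" for e
  proof -
    obtain N :: nat where N: "1 / real (Suc N) < e" using reals_Archimedean[OF e0]
      by (auto simp: inverse_eq_divide)
    have "\<forall>\<^sub>F n in sequentially. n \<ge> N" by (simp add: eventually_ge_at_top)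
    then show ?thesis
    proof (rule eventually_mono)
      fix n assume "n \<ge> N"
      then have "r n \<ge> N" using lr(1) seq_suble order_trans by blast
      then have "real (Suc N) \<le> real (Suc (r n))" by simp
      then have "1 / real (Suc (r n)) \<le> 1 / real (Suc N)" by (rule divide_left_mono) auto
      then show "1 / real (Suc (r n)) \<le> e" using N by simp
    qed
  qed
  have "chain_to f a l"
    unfolding chain_to_def
  proof (intro allI impI)
    fix d :: real assume "d > 0"
    obtain n where n: "dist (q (r n)) l < d/2" "1 / real (Suc (r n)) \<le> d/2"
      using ev_ex[OF eventually_conj[OF ev[of "d/2"] ev2[of "d/2"]]] \<open>d>0\<close> by auto
    obtain \<xi> k where xi: "is_chain f (1/(Suc (r n))) \<xi> k" "\<xi> 0 = a" "\<xi> k = q (r n)" using q(1) by blast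
    have "is_chain f (1/(Suc (r n)) + d/2) (\<xi>(k := l)) k"
      using chain_updk[OF xi(1), of l "d/2"] n xi(3) by (simp add: dist_commute less_imp_le)
    moreover have "1/(Suc (r n)) + d/2 \<le> d" using n by simp
    ultimately have "is_chain f d (\<xi>(k := l)) k" by (rule chain_mono)
    moreover have "k \<ge> 1" using xi by (simp add: is_chain_def)
    moreover have "(\<xi>(k := l)) 0 = a" "(\<xi>(k := l)) k = l" using xi(2) \<open>k \<ge> 1\<close> by simp_all
    ultimately show "\<exists>\<xi> k. is_chain f d \<xi> k \<and> \<xi> 0 = a \<and> \<xi> k = l" by blast
  qed
  moreover have "chain_to f l a"
    unfolding chain_to_def
  proof (intro allI impI)
    fix d :: real assume "d > 0"
    obtain s where s: "s > 0" "\<forall>x y. dist x y < s \<longrightarrow> dist (f x) (f y) < d/2"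
      using uc[of "d/2"] \<open>d > 0\<close> by auto
    obtain n where n: "dist (q (r n)) l < s" "1 / real (Suc (r n)) \<le> d/2"
      using ev_ex[OF eventually_conj[OF ev[of s] ev2[of "d/2"]]] \<open>d>0\<close> \<open>s>0\<close> by auto
    obtain \<xi> k where xi: "is_chain f (1/(Suc (r n))) \<xi> k" "\<xi> 0 = q (r n)" "\<xi> k = a" using q(2) by blast
    have "dist (f l) (f (\<xi> 0)) \<le> d/2" using s n xi(2) by (simp add: dist_commute less_imp_le)
    from chain_upd0[OF xi(1) this]
    have "is_chain f (1/(Suc (r n)) + d/2) (\<xi>(0 := l)) k" .
    moreover have "1/(Suc (r n)) + d/2 \<le> d" using n by simp
    ultimately have "is_chain f d (\<xi>(0 := l)) k" by (rule chain_mono)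
    moreover have "k \<ge> 1" using xi by (simp add: is_chain_def)
    moreover have "(\<xi>(0 := l)) 0 = l" "(\<xi>(0 := l)) k = a" using xi(3) \<open>k \<ge> 1\<close> by simp_all
    ultimately show "\<exists>\<xi> k. is_chain f d \<xi> k \<and> \<xi> 0 = l \<and> \<xi> k = a" by blast
  qed
  moreover have a0: "chain_to f c0 a" "chain_to f a c0" using assms(1) C_iff by auto
  ultimately have "chain_to f c0 l" "chain_to f l c0" using chain_to_trans by blast+
  then have "l \<in> C" using C_iff by blast
  obtain n where n: "dist (q (r n)) l < \<eta>" using ev_ex[OF ev[OF assms(2)]] by auto
  have "infdist (q (r n)) C \<le> infdist l C + dist (q (r n)) l" by (rule infdist_triangle)
  also have "\<dots> < \<eta>" using \<open>l \<in> C\<close> n by simp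
  finally show False using q(3)[of "r n"] by simp
qed

lemma CT:
  assumes "a \<in> C" "b \<in> C" "g > 0"
  shows "\<exists>\<xi> k. is_chain f g \<xi> k \<and> (\<forall>i\<le>k. \<xi> i \<in> C) \<and> \<xi> 0 = a \<and> \<xi> k = b"
proof -
  obtain s where s: "s > 0" "\<forall>x y. dist x y < s \<longrightarrow> dist (f x) (f y) < g/3"
    using uc[of "g/3"] assms by auto
  define \<eta> where "\<eta> = min s (g/3)"
  have "\<eta> > 0" using s assms by (simp add: \<eta>_def)
  obtain e where e: "e > 0" "\<forall>q. (\<exists>\<xi> k. is_chain f e \<xi> k \<and> \<xi> 0 = a \<and> \<xi> k = q) \<and>
                   (\<exists>\<xi> k. is_chain f e \<xi> k \<and> \<xi> 0 = q \<and> \<xi> k = a) \<longrightarrow> infdist q C < \<eta>"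
    using key[OF assms(1) \<open>\<eta> > 0\<close>] by blast
  define e' where "e' = min e (g/3)"
  have "e' > 0" using e assms by (simp add: e'_def)
  have "chain_to f c0 a" "chain_to f a c0" "chain_to f c0 b" "chain_to f b c0" using assms C_iff by auto
  then have ab: "chain_to f a b" "chain_to f b a" using chain_to_trans by blast+
  obtain \<xi> k where xi: "is_chain f e' \<xi> k" "\<xi> 0 = a" "\<xi> k = b" using ab(1) \<open>e'>0\<close> unfolding chain_to_def by blast
  obtain \<zeta> l where ze: "is_chain f e' \<zeta> l" "\<zeta> 0 = b" "\<zeta> l = a" using ab(2) \<open>e'>0\<close> unfolding chain_to_def by blast
  have k1: "k \<ge> 1" using xi by (simp add: is_chain_def)
  have near: "\<exists>c\<in>C. dist (\<xi> i) c < \<eta>" if "i \<le> k" for i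
  proof (cases "i = 0 \<or> i = k")
    case True then show ?thesis using xi assms \<open>\<eta>>0\<close> by (metis dist_self)
  next
    case False
    then have i: "1 \<le> i" "i < k" using that by auto
    have "is_chain f e' \<xi> i" using chain_prefix[OF xi(1) i(1)] i by simp
    moreover have "e' \<le> e" by (simp add: e'_def)
    ultimately have c1: "is_chain f e \<xi> i" by (rule chain_mono)
    have "is_chain f e' (\<lambda>t. \<xi> (i + t)) (k - i)" using chain_suffix[OF xi(1) i(2)] .
    from chain_cat[OF this ze(1)] i xi(3)
    have c2': "is_chain f e' (cat (\<lambda>t. \<xi> (i + t)) (k - i) \<zeta>) (k - i + l)"
         "cat (\<lambda>t. \<xi> (i + t)) (k - i) \<zeta> (k - i + l) = a" using ze by auto
    have "e' \<le> e" by (simp add: e'_def)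
    with c2'(1) have c2: "is_chain f e (cat (\<lambda>t. \<xi> (i + t)) (k - i) \<zeta>) (k - i + l)"
      by (rule chain_mono)
    have "cat (\<lambda>t. \<xi> (i + t)) (k - i) \<zeta> 0 = \<xi> i" by simp
    then have A2: "\<exists>\<xi>' k. is_chain f e \<xi>' k \<and> \<xi>' 0 = \<xi> i \<and> \<xi>' k = a"
      using c2 \<open>cat (\<lambda>t. \<xi> (i + t)) (k - i) \<zeta> (k - i + l) = a\<close> by blast
    have A1: "\<exists>\<xi>' k. is_chain f e \<xi>' k \<and> \<xi>' 0 = a \<and> \<xi>' k = \<xi> i"
      using c1 xi(2) by blast
    have "infdist (\<xi> i) C < \<eta>" using e(2)[rule_format, of "\<xi> i"] A1 A2 by simp
    then obtain c where "c \<in> C" "dist (\<xi> i) c < \<eta>" using infdist_lessE[OF _ C_ne] by blast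
    then show ?thesis by blast
  qed
  define c where "c i = (if i = 0 then a else if i = k then b else (SOME c. c \<in> C \<and> dist (\<xi> i) c < \<eta>))" for i
  have c: "c i \<in> C \<and> dist (\<xi> i) (c i) < \<eta>" if "i \<le> k" for i
  proof -
    consider "i = 0" | "i = k" "i \<noteq> 0" | "i \<noteq> 0" "i \<noteq> k" by blast
    then show ?thesis
    proof cases
      case 1 then show ?thesis using assms xi \<open>\<eta>>0\<close> by (simp add: c_def)
    next
      case 2 then show ?thesis using assms xi \<open>\<eta>>0\<close> by (simp add: c_def)
    next
      case 3
      then have "\<exists>c. c \<in> C \<and> dist (\<xi> i) c < \<eta>" using near[OF that] by blast
      from someI_ex[OF this] show ?thesis using 3 by (simp add: c_def)
    qed
  qed
  have "is_chain f g c k"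
    unfolding is_chain_def
  proof (intro conjI allI impI)
    show "1 \<le> k" by fact
    fix i assume i: "i < k"
    have "dist (f (c i)) (c (Suc i)) \<le> dist (f (c i)) (f (\<xi> i)) + dist (f (\<xi> i)) (\<xi> (Suc i)) + dist (\<xi> (Suc i)) (c (Suc i))"
      using dist_triangle[of "f (c i)" "c (Suc i)" "f (\<xi> i)"] dist_triangle[of "f (\<xi> i)" "c (Suc i)" "\<xi> (Suc i)"] by linarith
    also have "\<dots> \<le> g/3 + g/3 + g/3"
    proof (intro add_mono)
      have "dist (c i) (\<xi> i) < s" using c[of i] i \<eta>_def by (simp add: dist_commute)
      then show "dist (f (c i)) (f (\<xi> i)) \<le> g/3" using s by (simp add: less_imp_le)
      show "dist (f (\<xi> i)) (\<xi> (Suc i)) \<le> g/3" using xi(1) i e'_def by (auto simp: is_chain_def intro: order_trans)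
      show "dist (\<xi> (Suc i)) (c (Suc i)) \<le> g/3" using c[of "Suc i"] i \<eta>_def by simp
    qed
    finally show "dist (f (c i)) (c (Suc i)) \<le> g" by simp
  qed
  moreover have "c 0 = a" "c k = b" using k1 by (auto simp: c_def)
  ultimately show ?thesis using c by blast
qed

end


lemma dl1: fixes m :: int assumes "m dvd xA" "y = cA*xA" shows "m dvd y"
  unfolding assms(2) by (intro dvd_mult assms(1))
lemma dl2: fixes m :: int assumes "m dvd xA" "m dvd xB" "y = cA*xA + cB*xB" shows "m dvd y"
  unfolding assms(3) by (intro dvd_add dvd_mult assms(1,2))
lemma dl3: fixes m :: int assumes "m dvd xA" "m dvd xB" "m dvd xC" "y = cA*xA + cB*xB + cC*xC" shows "m dvd y"
  unfolding assms(4) by (intro dvd_add dvd_mult assms(1,2,3))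
lemma dl4: fixes m :: int assumes "m dvd xA" "m dvd xB" "m dvd xC" "m dvd xD"
  "y = cA*xA + cB*xB + cC*xC + cD*xD" shows "m dvd y"
  unfolding assms(5) by (intro dvd_add dvd_mult assms(1,2,3,4))

context cc begin

definition cch :: "real \<Rightarrow> (nat \<Rightarrow> 'a) \<Rightarrow> nat \<Rightarrow> 'a \<Rightarrow> 'a \<Rightarrow> bool" where
  "cch g \<xi> k a b \<longleftrightarrow> is_chain f g \<xi> k \<and> (\<forall>i\<le>k. \<xi> i \<in> C) \<and> \<xi> 0 = a \<and> \<xi> k = b"

abbreviation pm where "pm g \<equiv> period f C g"

lemma cch_C: "cch g \<xi> k a b \<Longrightarrow> a \<in> C \<and> b \<in> C"
  unfolding cch_def by (metis le0 order_refl)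

lemma cch_k: "cch g \<xi> k a b \<Longrightarrow> k \<ge> 1"
  unfolding cch_def is_chain_def by simp

lemma cyc_dvd: "cch g \<xi> k a a \<Longrightarrow> pm g dvd k"
  unfolding period_def cch_def by (rule Gcd_dvd) auto

lemma CT': "a \<in> C \<Longrightarrow> b \<in> C \<Longrightarrow> g > 0 \<Longrightarrow> \<exists>\<xi> k. cch g \<xi> k a b"
  using CT unfolding cch_def by blast

lemma pm_pos: assumes "g > 0" shows "pm g > 0"
proof -
  obtain \<xi> k where h: "cch g \<xi> k c0 c0" using CT'[OF c0_in c0_in assms] by blast
  have "k \<in> {k. \<exists>\<xi>. is_chain f g \<xi> k \<and> (\<forall>i\<le>k. \<xi> i \<in> C) \<and> \<xi> 0 = \<xi> k}"
    using h unfolding cch_def by auto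
  moreover have "k \<noteq> 0" using cch_k[OF h] by simp
  ultimately have "Gcd {k. \<exists>\<xi>. is_chain f g \<xi> k \<and> (\<forall>i\<le>k. \<xi> i \<in> C) \<and> \<xi> 0 = \<xi> k} \<noteq> 0"
    unfolding Gcd_0_iff by blast
  then have "pm g \<noteq> 0" unfolding period_def .
  then show ?thesis by simp
qed

lemma cch_cat: "cch g \<xi> k a b \<Longrightarrow> cch g \<zeta> l b c \<Longrightarrow> cch g (cat \<xi> k \<zeta>) (k + l) a c"
  unfolding cch_def using chain_cat[of f g \<xi> k \<zeta> l] cat_in[of k \<xi> C l \<zeta>] by auto

lemma cong_len:
  assumes "g > 0" "cch g \<xi> k a b" "cch g \<zeta> l a b"
  shows "int (pm g) dvd int k - int l"
proof -
  obtain \<rho> r where r: "cch g \<rho> r b a" using CT'[of b a g] cch_C[OF assms(2)] assms(1) by blast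
  have "pm g dvd k + r" using cyc_dvd[OF cch_cat[OF assms(2) r]] .
  moreover have "pm g dvd l + r" using cyc_dvd[OF cch_cat[OF assms(3) r]] .
  ultimately have h: "int (pm g) dvd int k + int r" "int (pm g) dvd int l + int r"
    by (simp_all flip: of_nat_add)
  show ?thesis by (rule dl2[where cA=1 and cB="-1", OF h]) simp
qed

definition ph :: "real \<Rightarrow> 'a \<Rightarrow> 'a \<Rightarrow> int" where
  "ph g a b = int (SOME k. \<exists>\<xi>. cch g \<xi> k a b)"

lemma ph_ex: assumes "g > 0" "a \<in> C" "b \<in> C" shows "\<exists>\<xi>. cch g \<xi> (nat (ph g a b)) a b"
proof -
  have "\<exists>k \<xi>. cch g \<xi> k a b" using CT'[OF assms(2,3,1)] by blast
  then have "\<exists>\<xi>. cch g \<xi> (SOME k. \<exists>\<xi>. cch g \<xi> k a b) a b" by (rule someI_ex)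
  then show ?thesis by (simp add: ph_def)
qed

lemma ph_len: assumes "g > 0" "cch g \<xi> k a b" shows "int (pm g) dvd int k - ph g a b"
proof -
  obtain \<zeta> where z: "cch g \<zeta> (nat (ph g a b)) a b" using ph_ex[OF assms(1)] cch_C[OF assms(2)] by blast
  have "ph g a b \<ge> 0" by (simp add: ph_def)
  then show ?thesis using cong_len[OF assms z] by simp
qed

lemma ph_add:
  assumes "g > 0" "a \<in> C" "b \<in> C" "c \<in> C"
  shows "int (pm g) dvd ph g a c - (ph g a b + ph g b c)"
proof -
  obtain \<xi> where x: "cch g \<xi> (nat (ph g a b)) a b" using ph_ex assms by blast
  obtain \<zeta> where z: "cch g \<zeta> (nat (ph g b c)) b c" using ph_ex assms by blast
  have "int (pm g) dvd int (nat (ph g a b) + nat (ph g b c)) - ph g a c"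
    using ph_len[OF assms(1) cch_cat[OF x z]] .
  moreover have "ph g a b \<ge> 0" "ph g b c \<ge> 0" by (simp_all add: ph_def)
  ultimately have h: "int (pm g) dvd ((ph g a b + ph g b c) - ph g a c)" by simp
  show ?thesis by (rule dl1[where cA="-1", OF h]) simp
qed

lemma ph_self: assumes "g > 0" "a \<in> C" shows "int (pm g) dvd ph g a a"
proof -
  obtain \<xi> where x: "cch g \<xi> (nat (ph g a a)) a a" using ph_ex assms by blast
  have "pm g dvd nat (ph g a a)" using cyc_dvd[OF x] .
  moreover have "ph g a a \<ge> 0" by (simp add: ph_def)
  ultimately show ?thesis by (metis int_dvd_int_iff int_nat_eq)
qed

lemma orbit_cch: assumes "a \<in> C" "k \<ge> 1" "g > 0" shows "cch g (\<lambda>i. (f ^^ i) a) k a ((f ^^ k) a)"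
  unfolding cch_def is_chain_def using assms inv_pow by auto

lemma ph_orb: assumes "g > 0" "a \<in> C" shows "int (pm g) dvd ph g a ((f ^^ k) a) - int k"
proof (cases "k = 0")
  case True then show ?thesis using ph_self[OF assms] by simp
next
  case False
  have h: "int (pm g) dvd int k - ph g a ((f ^^ k) a)" using ph_len[OF assms(1) orbit_cch[OF assms(2) _ assms(1)]] False by simp
  show ?thesis by (rule dl1[where cA="-1", OF h]) simp
qed

lemma dvd_comb3:
  fixes m :: int
  assumes "m dvd x" "m dvd y" "m dvd z" "e = x + y - z"
  shows "m dvd e"
  using assms by (simp add: dvd_add dvd_diff)

lemma ph_shift:
  assumes "g > 0" "a \<in> C" "b \<in> C"
  shows "int (pm g) dvd ph g ((f ^^ i) a) ((f ^^ j) b) - (ph g a b + int j - int i)"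
proof -
  have ia: "(f ^^ i) a \<in> C" and jb: "(f ^^ j) b \<in> C" using assms inv_pow by auto
  have h1: "int (pm g) dvd ph g a ((f ^^ j) b) - (ph g a b + ph g b ((f ^^ j) b))" using ph_add[OF assms jb] .
  have h2: "int (pm g) dvd ph g b ((f ^^ j) b) - int j" using ph_orb[OF assms(1,3)] .
  have h3: "int (pm g) dvd ph g a ((f ^^ j) b) - (ph g a ((f ^^ i) a) + ph g ((f ^^ i) a) ((f ^^ j) b))"
    using ph_add[OF assms(1,2) ia jb] .
  have h4: "int (pm g) dvd ph g a ((f ^^ i) a) - int i" using ph_orb[OF assms(1,2)] .
  show ?thesis by (rule dl4[where cA=1 and cB=1 and cC="-1" and cD="-1", OF h1 h2 h3 h4]) simp
qed

lemma ph_near: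
  assumes "g > 0" "a \<in> C" "b \<in> C" "dist (f a) (f b) \<le> g"
  shows "int (pm g) dvd ph g a b"
proof -
  have fb: "f b \<in> C" using inv assms by auto
  have "cch g (\<lambda>i. if i = 0 then a else f b) 1 a (f b)"
    unfolding cch_def is_chain_def using assms fb by auto
  from ph_len[OF assms(1) this] have h1: "int (pm g) dvd 1 - ph g a (f b)" by simp
  have h2: "int (pm g) dvd ph g b (f b) - 1" using ph_orb[OF assms(1,3), of 1] by simp
  have h3: "int (pm g) dvd ph g a (f b) - (ph g a b + ph g b (f b))" using ph_add[OF assms(1,2,3) fb] .
  show ?thesis by (rule dl3[where cA="-1" and cB="-1" and cC="-1", OF h1 h2 h3]) simp
qed

lemma ph_antisym:
  assumes "g > 0" "a \<in> C" "b \<in> C"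
  shows "int (pm g) dvd ph g a b + ph g b a"
proof -
  have h1: "int (pm g) dvd ph g a a - (ph g a b + ph g b a)" using ph_add[OF assms(1,2,3,2)] .
  have h2: "int (pm g) dvd ph g a a" using ph_self assms by blast
  show ?thesis by (rule dl2[where cA="-1" and cB=1, OF h1 h2]) simp
qed

lemma rel_delta_iff:
  assumes "g > 0"
  shows "rel_delta f C g a b \<longleftrightarrow> a \<in> C \<and> b \<in> C \<and> int (pm g) dvd ph g a b"
proof
  assume "rel_delta f C g a b"
  then obtain \<xi> k where h: "cch g \<xi> k a b" "pm g dvd k" unfolding rel_delta_def cch_def by blast
  have h1: "int (pm g) dvd int k - ph g a b" using ph_len[OF assms h(1)] .
  have h2: "int (pm g) dvd int k" using h(2) by simp
  have "int (pm g) dvd ph g a b" by (rule dl2[where cA="-1" and cB=1, OF h1 h2]) simp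
  then show "a \<in> C \<and> b \<in> C \<and> int (pm g) dvd ph g a b" using cch_C[OF h(1)] by simp
next
  assume h: "a \<in> C \<and> b \<in> C \<and> int (pm g) dvd ph g a b"
  then obtain \<xi> where x: "cch g \<xi> (nat (ph g a b)) a b" using ph_ex assms by blast
  have "ph g a b \<ge> 0" by (simp add: ph_def)
  then have "pm g dvd nat (ph g a b)" using h by (metis int_dvd_int_iff int_nat_eq)
  then show "rel_delta f C g a b" using x h unfolding rel_delta_def cch_def by blast
qed

lemma class_delta_eq:
  assumes "g > 0" "dd \<in> C" "D = {y \<in> C. rel_C f C dd y}"
  shows "class_delta f C D g = {y. y \<in> C \<and> int (pm g) dvd ph g dd y}"
proof -
  define E0 where "E0 = {y. rel_delta f C g dd y}"
  have E0: "E0 = {y. y \<in> C \<and> int (pm g) dvd ph g dd y}"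
    unfolding E0_def using rel_delta_iff[OF assms(1)] assms(2) by auto
  have P0: "E0 \<in> classes_delta f C g \<and> D \<subseteq> E0"
    using assms unfolding E0_def classes_delta_def rel_C_def by auto
  have ddD: "dd \<in> D" using assms ph_self rel_delta_iff unfolding rel_C_def by auto
  have uniq: "E = E0" if hE: "E \<in> classes_delta f C g \<and> D \<subseteq> E" for E
  proof -
    obtain p where p: "p \<in> C" "E = {y. rel_delta f C g p y}" using hE unfolding classes_delta_def by blast
    have "rel_delta f C g p dd" using ddD hE p by auto
    then have pd: "int (pm g) dvd ph g p dd" using rel_delta_iff[OF assms(1)] by simp
    have "y \<in> E \<longleftrightarrow> y \<in> E0" for y
    proof (cases "y \<in> C")
      case True
      have h: "int (pm g) dvd ph g p y - (ph g p dd + ph g dd y)" using ph_add[OF assms(1) p(1) assms(2) True] .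
      have "int (pm g) dvd ph g p y \<longleftrightarrow> int (pm g) dvd ph g dd y"
      proof
        assume h0: "int (pm g) dvd ph g p y"
        show "int (pm g) dvd ph g dd y" by (rule dl3[where cA=1 and cB="-1" and cC="-1", OF h0 h pd]) simp
      next
        assume h0: "int (pm g) dvd ph g dd y"
        show "int (pm g) dvd ph g p y" by (rule dl3[where cA=1 and cB=1 and cC=1, OF h0 h pd]) simp
      qed
      then show ?thesis using p(2) E0 rel_delta_iff[OF assms(1)] True p(1) by auto
    next
      case False
      then show ?thesis using p(2) E0 rel_delta_iff[OF assms(1)] by auto
    qed
    then show ?thesis by blast
  qed
  have "\<exists>!E. E \<in> classes_delta f C g \<and> D \<subseteq> E" using P0 uniq by blast
  then have "class_delta f C D g = E0" unfolding class_delta_def using P0 by (rule the1_equality)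
  then show ?thesis using E0 by simp
qed

lemma Vs_near:
  assumes "g > 0" "dd \<in> C" "D = {y \<in> C. rel_C f C dd y}" "x \<in> Vs f C D" "\<eta> > 0"
  shows "\<exists>S0. \<forall>s\<ge>S0. \<exists>d. d \<in> C \<and> int (pm g) dvd ph g dd d \<and> dist ((f ^^ s) x) ((f ^^ s) d) < \<eta>"
proof -
  have "(\<lambda>i. infdist ((f ^^ i) x) ((f ^^ i) ` class_delta f C D g)) \<longlonglongrightarrow> 0"
    using assms(1,4) unfolding Vs_def by blast
  then have "\<forall>\<^sub>F i in sequentially. infdist ((f ^^ i) x) ((f ^^ i) ` class_delta f C D g) < \<eta>"
    using assms(5) by (rule order_tendstoD)
  then obtain S0 where S0: "\<forall>s\<ge>S0. infdist ((f ^^ s) x) ((f ^^ s) ` class_delta f C D g) < \<eta>"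
    unfolding eventually_sequentially by blast
  have cd: "class_delta f C D g = {y. y \<in> C \<and> int (pm g) dvd ph g dd y}" using class_delta_eq assms by blast
  have ne: "dd \<in> class_delta f C D g" using cd assms ph_self by auto
  show ?thesis
  proof (intro exI[of _ S0] allI impI)
    fix s assume "s \<ge> S0"
    then have "infdist ((f ^^ s) x) ((f ^^ s) ` class_delta f C D g) < \<eta>" using S0 by blast
    then obtain y where "y \<in> (f ^^ s) ` class_delta f C D g" "dist ((f ^^ s) x) y < \<eta>"
      using infdist_lessE ne by blast
    then show "\<exists>d. d \<in> C \<and> int (pm g) dvd ph g dd d \<and> dist ((f ^^ s) x) ((f ^^ s) d) < \<eta>"
      using cd by auto
  qed
qed

end


lemma mult_in:
  assumes add: "\<forall>x\<in>S. \<forall>y\<in>S. x + y \<in> (S::nat set)" and y: "y \<in> S"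
  shows "t \<ge> 1 \<Longrightarrow> t * y \<in> S"
proof (induction t)
  case 0 then show ?case by simp
next
  case (Suc t)
  show ?case
  proof (cases "t = 0")
    case True then show ?thesis using y by simp
  next
    case False
    then have "t * y \<in> S" using Suc by simp
    then show ?thesis using add y by (simp add: add.commute)
  qed
qed

lemma semigroup_step:
  fixes S :: "nat set"
  assumes add: "\<forall>x\<in>S. \<forall>y\<in>S. x + y \<in> S" and s: "s \<in> S" "s > 0"
  shows "\<exists>d>0. (\<exists>b\<in>S. b + d \<in> S) \<and> (\<forall>x\<in>S. d dvd x)"
proof -
  define D0 where "D0 = {d. d > 0 \<and> (\<exists>b\<in>S. b + d \<in> S)}"
  have "s \<in> D0" using s add unfolding D0_def by blast
  define d where "d = (LEAST d. d \<in> D0)"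
  have dD: "d \<in> D0" unfolding d_def using \<open>s \<in> D0\<close> by (rule LeastI)
  then obtain b where b: "b \<in> S" "b + d \<in> S" "d > 0" unfolding D0_def by blast
  have "d dvd x" if x: "x \<in> S" for x
  proof (rule ccontr)
    assume nd: "\<not> d dvd x"
    define q where "q = x div d"
    define r where "r = x mod d"
    have xr: "x = q * d + r" unfolding q_def r_def by simp
    have r0: "r > 0" using nd unfolding r_def by (simp add: dvd_eq_mod_eq_0)
    have rd: "r < d" unfolding r_def using b(3) by simp
    have y1: "q * (b + d) + b \<in> S"
    proof (cases "q = 0")
      case True then show ?thesis using b by simp
    next
      case False
      then have "q * (b + d) \<in> S" using mult_in[OF add b(2), of q] by simp
      then show ?thesis using add b by blast
    qed
    have "(q + 1) * b \<in> S" using mult_in[OF add b(1), of "q+1"] by simp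
    then have "x + (q + 1) * b \<in> S" using add x by blast
    moreover have "x + (q + 1) * b = (q * (b + d) + b) + r" using xr by (simp add: algebra_simps)
    ultimately have "(q * (b + d) + b) + r \<in> S" by (simp only:)
    then have "r \<in> D0" using y1 r0 unfolding D0_def by blast
    then have "d \<le> r" unfolding d_def by (rule Least_le)
    then show False using rd by simp
  qed
  then show ?thesis using b by blast
qed

lemma semigroup_large:
  fixes S :: "nat set"
  assumes add: "\<forall>x\<in>S. \<forall>y\<in>S. x + y \<in> S" and b: "b \<in> S" "b + p \<in> S" "p > 0" "p dvd b" "b > 0"
  shows "\<forall>t \<ge> (b div p) * (b div p). t * p \<in> S"
proof (intro allI impI)
  fix t assume t: "t \<ge> (b div p) * (b div p)"
  define c where "c = b div p"
  have bc: "b = c * p" unfolding c_def using b(4) by simp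
  have c1: "c \<ge> 1" using bc b(5) by (cases c) auto
  define u where "u = t div c"
  define v where "v = t mod c"
  have tuv: "t = u * c + v" unfolding u_def v_def by simp
  have vc: "v < c" unfolding v_def using c1 by simp
  have uc: "u \<ge> c"
  proof -
    have "c * c \<le> t" using t c_def by simp
    then have "(c * c) div c \<le> t div c" by (rule div_le_mono)
    then show ?thesis using c1 unfolding u_def by simp
  qed
  define w where "w = u - v"
  have w: "u = v + w" "w \<ge> 1" using uc vc unfolding w_def by simp_all
  have eq: "t * p = w * b + v * (b + p)" using tuv w(1) bc by (simp add: algebra_simps)
  have wb: "w * b \<in> S" using mult_in[OF add b(1) w(2)] .
  show "t * p \<in> S"
  proof (cases "v = 0")
    case True then show ?thesis using eq wb by simp
  next
    case False
    then have "v * (b + p) \<in> S" using mult_in[OF add b(2), of v] by simp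
    then show ?thesis using eq wb add by simp
  qed
qed

context cc begin

lemma cyc_large:
  assumes "g > 0" "a \<in> C"
  shows "\<exists>N\<ge>1. \<forall>t\<ge>N. \<exists>\<xi>. cch g \<xi> (t * pm g) a a"
proof -
  define S where "S = {k. \<exists>\<xi>. cch g \<xi> k a a}"
  have add: "\<forall>x\<in>S. \<forall>y\<in>S. x + y \<in> S" unfolding S_def using cch_cat by blast
  obtain \<xi>0 k0 where k0: "cch g \<xi>0 k0 a a" using CT'[OF assms(2) assms(2) assms(1)] by blast
  have "k0 \<in> S" "k0 > 0" using k0 cch_k[OF k0] unfolding S_def by auto
  from semigroup_step[OF add this] obtain d b where db: "d > 0" "b \<in> S" "b + d \<in> S" "\<forall>x\<in>S. d dvd x"
    by blast
  have "d dvd pm g" unfolding period_def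
  proof (rule Gcd_greatest)
    fix k assume "k \<in> {k. \<exists>\<xi>. is_chain f g \<xi> k \<and> (\<forall>i\<le>k. \<xi> i \<in> C) \<and> \<xi> 0 = \<xi> k}"
    then obtain \<xi> where xi: "is_chain f g \<xi> k" "\<forall>i\<le>k. \<xi> i \<in> C" "\<xi> 0 = \<xi> k" by blast
    have cy: "cch g \<xi> k (\<xi> 0) (\<xi> 0)" using xi unfolding cch_def by simp
    have c: "\<xi> 0 \<in> C" using xi(2) by simp
    obtain \<rho>1 \<alpha> where r1: "cch g \<rho>1 \<alpha> a (\<xi> 0)" using CT'[OF assms(2) c assms(1)] by blast
    obtain \<rho>2 \<beta> where r2: "cch g \<rho>2 \<beta> (\<xi> 0) a" using CT'[OF c assms(2) assms(1)] by blast
    have "\<alpha> + \<beta> \<in> S" unfolding S_def using cch_cat[OF r1 r2] by blast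
    moreover have "\<alpha> + (k + \<beta>) \<in> S" unfolding S_def using cch_cat[OF r1 cch_cat[OF cy r2]] by blast
    moreover have "\<alpha> + (k + \<beta>) = (\<alpha> + \<beta>) + k" by simp
    ultimately have h1: "d dvd \<alpha> + \<beta>" and h2: "d dvd (\<alpha> + \<beta>) + k" using db(4) by auto
    then show "d dvd k" by (simp add: dvd_add_right_iff)
  qed
  moreover have "pm g dvd d"
  proof -
    have "pm g dvd b" "pm g dvd b + d" using db(2,3) cyc_dvd unfolding S_def by blast+
    then show ?thesis by (simp add: dvd_add_right_iff)
  qed
  ultimately have dp: "d = pm g" by (rule dvd_antisym)
  have bpos: "b > 0" using db(2) cch_k unfolding S_def by fastforce
  have "pm g dvd b" using db(2) cyc_dvd unfolding S_def by blast
  from semigroup_large[OF add db(2) db(3)[unfolded dp] pm_pos[OF assms(1)] this bpos]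
  have "\<forall>t\<ge>(b div pm g) * (b div pm g). t * pm g \<in> S" .
  then have "\<forall>t\<ge>max 1 ((b div pm g) * (b div pm g)). \<exists>\<xi>. cch g \<xi> (t * pm g) a a"
    unfolding S_def by simp
  then show ?thesis by (intro exI[of _ "max 1 ((b div pm g) * (b div pm g))"]) simp
qed

lemma pair_large:
  assumes "g > 0" "a \<in> C" "b \<in> C"
  shows "\<exists>M0. \<forall>M\<ge>M0. int (pm g) dvd int M - ph g a b \<longrightarrow> (\<exists>\<xi>. cch g \<xi> M a b)"
proof -
  obtain \<rho> where r: "cch g \<rho> (nat (ph g a b)) a b" using ph_ex assms by blast
  define l0 where "l0 = nat (ph g a b)"
  have l0: "int l0 = ph g a b" unfolding l0_def by (simp add: ph_def)
  obtain N where N: "N \<ge> 1" "\<forall>t\<ge>N. \<exists>\<xi>. cch g \<xi> (t * pm g) a a" using cyc_large[OF assms(1,2)] by blast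
  have pp: "pm g > 0" using pm_pos[OF assms(1)] .
  show ?thesis
  proof (intro exI[of _ "l0 + N * pm g"] allI impI)
    fix M assume M: "M \<ge> l0 + N * pm g" and dv: "int (pm g) dvd int M - ph g a b"
    have "int (pm g) dvd int (M - l0)" using dv l0 M by (simp add: of_nat_diff)
    then have "pm g dvd M - l0" by (simp only: int_dvd_int_iff)
    then obtain t where t: "M - l0 = t * pm g" by (auto simp: dvd_def mult.commute)
    have "t * pm g \<ge> N * pm g" using t M by linarith
    then have "t \<ge> N" using pp by simp
    then obtain \<xi> where xi: "cch g \<xi> (t * pm g) a a" using N(2) by blast
    have "cch g (cat \<xi> (t * pm g) \<rho>) (t * pm g + l0) a b" using cch_cat[OF xi r] l0_def by simp
    moreover have "t * pm g + l0 = M" using t M by simp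
    ultimately show "\<exists>\<xi>. cch g \<xi> M a b" by auto
  qed
qed

lemma ucl:
  assumes g: "g > 0" and eta: "\<eta> > 0" and uce: "\<forall>x y. dist x y < 2*\<eta> \<longrightarrow> dist (f x) (f y) < g"
    and eg: "2*\<eta> \<le> g"
  shows "\<exists>M0. \<forall>a b s t M. a \<in> C \<longrightarrow> b \<in> C \<longrightarrow> M \<ge> M0 \<longrightarrow> int (pm g) dvd int M - ph g a b \<longrightarrow>
           dist s a < \<eta> \<longrightarrow> dist t b < \<eta> \<longrightarrow>
           (\<exists>\<zeta>. \<zeta> 0 = s \<and> \<zeta> M = t \<and> (\<forall>i<M. dist (f (\<zeta> i)) (\<zeta> (Suc i)) \<le> 3*g))"
proof -
  obtain P where P: "finite P" "P \<subseteq> C" "\<forall>c\<in>C. \<exists>p\<in>P. dist c p < \<eta>"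
    using finite_net[OF cpt eta] by blast
  define Mf where "Mf p q = (SOME M0. \<forall>M\<ge>M0. int (pm g) dvd int M - ph g p q \<longrightarrow> (\<exists>\<xi>. cch g \<xi> M p q))" for p q
  have Mf: "\<forall>M\<ge>Mf p q. int (pm g) dvd int M - ph g p q \<longrightarrow> (\<exists>\<xi>. cch g \<xi> M p q)" if "p \<in> C" "q \<in> C" for p q
    unfolding Mf_def using pair_large[OF g that] by (rule someI_ex)
  define M0 where "M0 = Max (insert 0 ((\<lambda>(p, q). Mf p q) ` (P \<times> P)))"
  have M0: "Mf p q \<le> M0" if "p \<in> P" "q \<in> P" for p q
    unfolding M0_def using P(1) that by (intro Max_ge) auto
  show ?thesis
  proof (intro exI[of _ M0] allI impI)
    fix a b s t M
    assume a: "a \<in> C" and b: "b \<in> C" and M: "M \<ge> M0" and dv: "int (pm g) dvd int M - ph g a b"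
      and sa: "dist s a < \<eta>" and tb: "dist t b < \<eta>"
    obtain p where p: "p \<in> P" "dist a p < \<eta>" using P(3) a by blast
    obtain q where q: "q \<in> P" "dist b q < \<eta>" using P(3) b by blast
    have pC: "p \<in> C" and qC: "q \<in> C" using p q P(2) by auto
    have "dist (f p) (f a) \<le> g" using uce p(2) eta by (simp add: dist_commute less_imp_le)
    then have F2: "int (pm g) dvd ph g p a" using ph_near[OF g pC a] by simp
    have "dist (f b) (f q) \<le> g" using uce q(2) eta by (simp add: less_imp_le)
    then have F4: "int (pm g) dvd ph g b q" using ph_near[OF g b qC] by simp
    have F1: "int (pm g) dvd ph g p q - (ph g p a + ph g a q)" using ph_add[OF g pC a qC] .
    have F3: "int (pm g) dvd ph g a q - (ph g a b + ph g b q)" using ph_add[OF g a b qC] .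
    have "int (pm g) dvd ph g p q - ph g a b"
      by (rule dl4[where cA=1 and cB=1 and cC=1 and cD=1, OF F1 F2 F3 F4]) simp
    then have "int (pm g) dvd int M - ph g p q"
      by (rule dl2[where cA="-1" and cB=1, OF _ dv]) simp
    moreover have "M \<ge> Mf p q" using M0[OF p(1) q(1)] M by simp
    ultimately obtain \<rho> where r: "cch g \<rho> M p q" using Mf[OF pC qC] by blast
    have M1: "M \<ge> 1" using cch_k[OF r] .
    have rc: "is_chain f g \<rho> M" "\<rho> 0 = p" "\<rho> M = q" using r unfolding cch_def by auto
    define \<zeta> where "\<zeta> i = (if i = 0 then s else if i = M then t else \<rho> i)" for i
    have close: "dist (\<zeta> i) (\<rho> i) < 2*\<eta>" if "i \<le> M" for i
    proof -
      consider "i = 0" | "i = M" "i \<noteq> 0" | "i \<noteq> 0" "i \<noteq> M" by blast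
      then show ?thesis
      proof cases
        case 1
        have "dist s p \<le> dist s a + dist a p" by (rule dist_triangle)
        then show ?thesis using 1 sa p(2) rc(2) by (simp add: \<zeta>_def)
      next
        case 2
        have "dist t q \<le> dist t b + dist b q" by (rule dist_triangle)
        then show ?thesis using 2 tb q(2) rc(3) by (simp add: \<zeta>_def)
      next
        case 3 then show ?thesis using eta by (simp add: \<zeta>_def)
      qed
    qed
    have steps: "\<forall>i<M. dist (f (\<zeta> i)) (\<zeta> (Suc i)) \<le> 3*g"
    proof (intro allI impI)
      fix i assume i: "i < M"
      have e1: "dist (f (\<zeta> i)) (f (\<rho> i)) \<le> g" using uce close[of i] i by (simp add: less_imp_le)
      have e2: "dist (f (\<rho> i)) (\<rho> (Suc i)) \<le> g" using rc(1) i unfolding is_chain_def by simp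
      have e3: "dist (\<rho> (Suc i)) (\<zeta> (Suc i)) \<le> g" using close[of "Suc i"] i eg by (simp add: dist_commute)
      have "dist (f (\<zeta> i)) (\<zeta> (Suc i)) \<le> dist (f (\<zeta> i)) (f (\<rho> i)) + dist (f (\<rho> i)) (\<zeta> (Suc i))"
        by (rule dist_triangle)
      moreover have "dist (f (\<rho> i)) (\<zeta> (Suc i)) \<le> dist (f (\<rho> i)) (\<rho> (Suc i)) + dist (\<rho> (Suc i)) (\<zeta> (Suc i))"
        by (rule dist_triangle)
      ultimately show "dist (f (\<zeta> i)) (\<zeta> (Suc i)) \<le> 3*g" using e1 e2 e3 by linarith
    qed
    have "\<zeta> 0 = s" "\<zeta> M = t" using M1 by (simp_all add: \<zeta>_def)
    then show "\<exists>\<zeta>. \<zeta> 0 = s \<and> \<zeta> M = t \<and> (\<forall>i<M. dist (f (\<zeta> i)) (\<zeta> (Suc i)) \<le> 3*g)"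
      using steps by blast
  qed
qed

end


definition err :: "('a::metric_space \<Rightarrow> 'a) \<Rightarrow> (nat \<Rightarrow> 'a) \<Rightarrow> nat \<Rightarrow> real" where
  "err f h i = dist (f (h i)) (h (Suc i))"

lemma cat_err_lt: "i < k \<Longrightarrow> err f (cat \<xi> k \<zeta>) i = err f \<xi> i"
  by (simp add: err_def cat_def)

lemma cat_err_ge: "\<xi> k = \<zeta> 0 \<Longrightarrow> err f (cat \<xi> k \<zeta>) (k + t) = err f \<zeta> t"
proof -
  assume h: "\<xi> k = \<zeta> 0"
  have "cat \<xi> k \<zeta> (k + t) = \<zeta> t" using cat_end[of \<xi> k \<zeta> t] h by simp
  moreover have "cat \<xi> k \<zeta> (Suc (k + t)) = \<zeta> (Suc t)" using cat_end[of \<xi> k \<zeta> "Suc t"] h by simp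
  ultimately show ?thesis by (simp add: err_def)
qed

lemma cat_err_bound:
  assumes "\<forall>i<k. err f \<xi> i \<le> d" "\<forall>i. err f \<zeta> i \<le> d" "\<xi> k = \<zeta> 0"
  shows "\<forall>i. err f (cat \<xi> k \<zeta>) i \<le> d"
proof
  fix i show "err f (cat \<xi> k \<zeta>) i \<le> d"
  proof (cases "i < k")
    case True then show ?thesis using assms(1) cat_err_lt by metis
  next
    case False
    then obtain t where "i = k + t" by (metis le_add_diff_inverse not_less)
    then show ?thesis using cat_err_ge[of \<xi> k \<zeta> f t] assms(3) assms(2) by simp
  qed
qed

lemma cat_err_zero:
  assumes "\<forall>i\<ge>B. err f \<zeta> i = 0" "\<xi> k = \<zeta> 0"
  shows "\<forall>i\<ge>k + B. err f (cat \<xi> k \<zeta>) i = 0"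
proof (intro allI impI)
  fix i assume i: "i \<ge> k + B"
  then obtain t where t: "i = k + t" "t \<ge> B" by (metis add_leD1 le_add_diff_inverse add_le_cancel_left)
  then show "err f (cat \<xi> k \<zeta>) i = 0" using cat_err_ge[of \<xi> k \<zeta> f t] assms(2) assms(1) by simp
qed

lemma orbit_err: "err f (\<lambda>s. (f ^^ (a + s)) w) i = 0"
  by (simp add: err_def)

lemma cont_funpow:
  fixes f :: "'a::topological_space \<Rightarrow> 'a"
  shows "continuous_on UNIV f \<Longrightarrow> continuous_on UNIV (f ^^ m)"
proof (induction m)
  case 0
  have "f ^^ 0 = (\<lambda>x. x)" by (rule ext) simp
  then show ?case by (simp add: continuous_on_id)
next
  case (Suc m)
  have "continuous_on ((f ^^ m) ` UNIV) f" using Suc.prems continuous_on_subset by blast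
  then have "continuous_on UNIV (f \<circ> (f ^^ m))"
    using continuous_on_compose[of UNIV "f ^^ m" f] Suc by simp
  then show ?case by simp
qed


lemma infdist_transfer:
  assumes "(\<lambda>s. infdist (p s) (A s)) \<longlonglongrightarrow> 0" "(\<lambda>s. dist (q s) (p s)) \<longlonglongrightarrow> 0"
  shows "(\<lambda>s. infdist (q s) (A s)) \<longlonglongrightarrow> 0"
proof (rule tendsto_sandwich[of "\<lambda>s. 0" _ _ "\<lambda>s. infdist (p s) (A s) + dist (q s) (p s)"])
  show "\<forall>\<^sub>F s in sequentially. 0 \<le> infdist (q s) (A s)" by (simp add: infdist_nonneg)
  show "\<forall>\<^sub>F s in sequentially. infdist (q s) (A s) \<le> infdist (p s) (A s) + dist (q s) (p s)"
    by (simp add: infdist_triangle)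
  show "(\<lambda>s. 0::real) \<longlonglongrightarrow> 0" by simp
  show "(\<lambda>s. infdist (p s) (A s) + dist (q s) (p s)) \<longlonglongrightarrow> 0"
    using tendsto_add[OF assms] by simp
qed

lemma Vs_transfer:
  assumes "p \<in> Vs f C E" "(\<lambda>s. dist ((f ^^ s) q) ((f ^^ s) p)) \<longlonglongrightarrow> 0"
  shows "q \<in> Vs f C E"
proof -
  have h1: "\<forall>d>0. (\<lambda>i. infdist ((f ^^ i) p) C) \<longlonglongrightarrow> 0 \<and>
      (\<lambda>i. infdist ((f ^^ i) p) ((f ^^ i) ` class_delta f C E d)) \<longlonglongrightarrow> 0"
    using assms(1) unfolding Vs_def Ws_def by auto
  have pW: "(\<lambda>i. infdist ((f ^^ i) p) C) \<longlonglongrightarrow> 0" using h1[rule_format, of 1] by simp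
  have pV: "\<And>d. d > 0 \<Longrightarrow> (\<lambda>i. infdist ((f ^^ i) p) ((f ^^ i) ` class_delta f C E d)) \<longlonglongrightarrow> 0"
    using h1 by blast
  have "(\<lambda>i. infdist ((f ^^ i) q) C) \<longlonglongrightarrow> 0"
    using infdist_transfer[of "\<lambda>i. (f ^^ i) p" "\<lambda>i. C" "\<lambda>i. (f ^^ i) q"] pW assms(2) by simp
  moreover have "(\<lambda>i. infdist ((f ^^ i) q) ((f ^^ i) ` class_delta f C E d)) \<longlonglongrightarrow> 0" if "d > 0" for d
    using infdist_transfer[of "\<lambda>i. (f ^^ i) p" "\<lambda>i. (f ^^ i) ` class_delta f C E d" "\<lambda>i. (f ^^ i) q"]
      pV[OF that] assms(2) by simp
  ultimately show ?thesis unfolding Vs_def Ws_def by auto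
qed

theorem lemma3p1:
  fixes f :: "'a::metric_space \<Rightarrow> 'a"
    and C D E :: "'a set"
    and n :: nat and x y :: "nat \<Rightarrow> 'a" and \<epsilon> :: real
  assumes "compact (UNIV :: 'a set)"
    and "continuous_on UNIV f"
    and "s_limit_shadowing f"
    and "C \<in> chain_components f"
    and "D \<in> classes f C" and "E \<in> classes f C"
    and "n \<ge> 1"
    and "\<forall>j\<in>{1..n}. x j \<in> Vs f C D"
    and "\<forall>j\<in>{1..n}. y j \<in> closure (Vs f C E)"
    and "\<epsilon> > 0"
  shows "\<exists>z :: nat \<Rightarrow> 'a. (\<forall>j\<in>{1..n}. z j \<in> closure (Vs f C E)) \<and>
           (\<exists>K L :: nat.
              (\<forall>j\<in>{1..n}. dist (y j) (z j) \<le> \<epsilon>) \<and>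
              (\<forall>j\<in>{1..n}. \<forall>i. dist ((f ^^ (K + i)) (x j)) ((f ^^ (L + i)) (z j)) \<le> \<epsilon>))"
proof -
  interpret cc f C by (rule cc.intro[OF assms(1) assms(2) assms(4)])
  obtain dd where dd: "dd \<in> C" "D = {y \<in> C. rel_C f C dd y}" using assms(5) unfolding classes_def by blast
  obtain ee where ee: "ee \<in> C" "E = {y \<in> C. rel_C f C ee y}" using assms(6) unfolding classes_def by blast
  have e2: "\<epsilon>/2 > 0" using assms(10) by simp
  obtain \<delta> where \<delta>: "\<delta> > 0" and SH: "\<And>xs. (\<forall>i. dist (f (xs i)) (xs (Suc i)) \<le> \<delta>) \<and>
       (\<lambda>i. dist (f (xs i)) (xs (Suc i))) \<longlonglongrightarrow> 0 \<Longrightarrow>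
       (\<exists>z. (\<forall>i. dist ((f ^^ i) z) (xs i) \<le> \<epsilon>/2) \<and> (\<lambda>i. dist ((f ^^ i) z) (xs i)) \<longlonglongrightarrow> 0)"
    using assms(3)[unfolded s_limit_shadowing_def, rule_format, OF e2] by blast
  define g where "g = \<delta>/3"
  have g: "g > 0" "3*g = \<delta>" using \<delta> by (simp_all add: g_def)
  obtain \<eta>0 where \<eta>0: "\<eta>0 > 0" "\<forall>x y. dist x y < \<eta>0 \<longrightarrow> dist (f x) (f y) < g" using uc[OF g(1)] by blast
  define \<eta> where "\<eta> = min (\<eta>0/2) (g/2)"
  have \<eta>: "\<eta> > 0" "2*\<eta> \<le> \<eta>0" "2*\<eta> \<le> g" using \<eta>0 g by (auto simp: \<eta>_def)
  have uce: "\<forall>x y. dist x y < 2*\<eta> \<longrightarrow> dist (f x) (f y) < g" using \<eta>0(2) \<eta>(2) by auto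
  obtain M0 where U: "\<And>a b s t M. a \<in> C \<Longrightarrow> b \<in> C \<Longrightarrow> M \<ge> M0 \<Longrightarrow> int (pm g) dvd int M - ph g a b \<Longrightarrow>
           dist s a < \<eta> \<Longrightarrow> dist t b < \<eta> \<Longrightarrow>
           (\<exists>\<zeta>. \<zeta> 0 = s \<and> \<zeta> M = t \<and> (\<forall>i<M. dist (f (\<zeta> i)) (\<zeta> (Suc i)) \<le> 3*g))"
    using ucl[OF g(1) \<eta>(1) uce \<eta>(3)] by blast
  have "\<forall>j\<in>{1..n}. \<exists>w. w \<in> Vs f C E \<and> dist w (y j) < \<epsilon>/2"
    using assms(9) e2 closure_approachable by blast
  from bchoice[OF this] obtain w where w: "\<forall>j\<in>{1..n}. w j \<in> Vs f C E \<and> dist (w j) (y j) < \<epsilon>/2"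
    by blast
  have evx: "\<forall>j\<in>{1..n}. eventually (\<lambda>s. (\<exists>d. d \<in> C \<and> int (pm g) dvd ph g dd d \<and> dist ((f ^^ s) (x j)) ((f ^^ s) d) < \<eta>)
       \<and> (\<exists>e. e \<in> C \<and> int (pm g) dvd ph g ee e \<and> dist ((f ^^ s) (w j)) ((f ^^ s) e) < \<eta>)) sequentially"
  proof
    fix j assume j: "j \<in> {1..n}"
    have "x j \<in> Vs f C D" using assms(8) j by blast
    from Vs_near[OF g(1) dd(1) dd(2) this \<eta>(1)]
    have A: "eventually (\<lambda>s. \<exists>d. d \<in> C \<and> int (pm g) dvd ph g dd d \<and> dist ((f ^^ s) (x j)) ((f ^^ s) d) < \<eta>) sequentially"
      unfolding eventually_sequentially .
    have "w j \<in> Vs f C E" using w j by blast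
    from Vs_near[OF g(1) ee(1) ee(2) this \<eta>(1)]
    have B: "eventually (\<lambda>s. \<exists>e. e \<in> C \<and> int (pm g) dvd ph g ee e \<and> dist ((f ^^ s) (w j)) ((f ^^ s) e) < \<eta>) sequentially"
      unfolding eventually_sequentially .
    show "eventually (\<lambda>s. (\<exists>d. d \<in> C \<and> int (pm g) dvd ph g dd d \<and> dist ((f ^^ s) (x j)) ((f ^^ s) d) < \<eta>)
       \<and> (\<exists>e. e \<in> C \<and> int (pm g) dvd ph g ee e \<and> dist ((f ^^ s) (w j)) ((f ^^ s) e) < \<eta>)) sequentially"
      using eventually_conj[OF A B] .
  qed
  have "eventually (\<lambda>s. \<forall>j\<in>{1..n}. (\<exists>d. d \<in> C \<and> int (pm g) dvd ph g dd d \<and> dist ((f ^^ s) (x j)) ((f ^^ s) d) < \<eta>)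
       \<and> (\<exists>e. e \<in> C \<and> int (pm g) dvd ph g ee e \<and> dist ((f ^^ s) (w j)) ((f ^^ s) e) < \<eta>)) sequentially"
    by (rule eventually_ball_finite[OF _ evx]) simp
  then obtain N where NN: "\<And>s j. s \<ge> N \<Longrightarrow> j \<in> {1..n} \<Longrightarrow>
       (\<exists>d. d \<in> C \<and> int (pm g) dvd ph g dd d \<and> dist ((f ^^ s) (x j)) ((f ^^ s) d) < \<eta>)
       \<and> (\<exists>e. e \<in> C \<and> int (pm g) dvd ph g ee e \<and> dist ((f ^^ s) (w j)) ((f ^^ s) e) < \<eta>)"
    unfolding eventually_sequentially by blast
  define r1 where "r1 = ph g ee dd"
  have pp: "pm g > 0" using pm_pos[OF g(1)] .
  define M where "M = M0 + nat ((r1 - int M0) mod int (pm g))"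
  have MM0: "M \<ge> M0" unfolding M_def by simp
  have S7: "int (pm g) dvd int M - r1"
  proof -
    have nn: "(r1 - int M0) mod int (pm g) \<ge> 0" using pp by simp
    have "int M - r1 = (r1 - int M0) mod int (pm g) - (r1 - int M0)" unfolding M_def using nn by simp
    also have "\<dots> = - ((r1 - int M0) div int (pm g) * int (pm g))"
      using div_mult_mod_eq[of "r1 - int M0" "int (pm g)"] by linarith
    finally show ?thesis by simp
  qed
  define L where "L = N + M"
  have core: "\<forall>j\<in>{1..n}. \<forall>T. \<exists>z. z \<in> Vs f C E \<and> dist (w j) z \<le> \<epsilon>/2 \<and>
      (\<forall>i\<le>T. dist ((f ^^ (N + i)) (x j)) ((f ^^ (L + i)) z) \<le> \<epsilon>/2)"
  proof (intro ballI allI)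
    fix j T assume j: "j \<in> {1..n}"
    obtain d1 where d1: "d1 \<in> C" "int (pm g) dvd ph g dd d1" "dist ((f ^^ N) (x j)) ((f ^^ N) d1) < \<eta>"
      using NN[OF order_refl j] by blast
    obtain e1 where e1: "e1 \<in> C" "int (pm g) dvd ph g ee e1" "dist ((f ^^ N) (w j)) ((f ^^ N) e1) < \<eta>"
      using NN[OF order_refl j] by blast
    define u where "u = (f ^^ N) e1"
    define v where "v = (f ^^ N) d1"
    have uC: "u \<in> C" and vC: "v \<in> C" using inv_pow e1(1) d1(1) by (auto simp: u_def v_def)
    have ph1: "int (pm g) dvd int M - ph g u v"
    proof -
      have S1: "int (pm g) dvd ph g u v - (ph g e1 d1 + int N - int N)"
        unfolding u_def v_def using ph_shift[OF g(1) e1(1) d1(1)] .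
      have S2: "int (pm g) dvd ph g e1 d1 - (ph g e1 ee + ph g ee d1)" using ph_add[OF g(1) e1(1) ee(1) d1(1)] .
      have S3: "int (pm g) dvd ph g ee d1 - (ph g ee dd + ph g dd d1)" using ph_add[OF g(1) ee(1) dd(1) d1(1)] .
      have S4: "int (pm g) dvd ph g ee e1 + ph g e1 ee" using ph_antisym[OF g(1) ee(1) e1(1)] .
      have S4': "int (pm g) dvd ph g e1 ee" by (rule dl2[where cA=1 and cB="-1", OF S4 e1(2)]) simp
      have A: "int (pm g) dvd ph g e1 d1 - r1"
        by (rule dl4[where cA=1 and cB=1 and cC=1 and cD=1, OF S2 S3 S4' d1(2)]) (simp add: r1_def)
      show ?thesis by (rule dl3[where cA=1 and cB="-1" and cC="-1", OF S7 S1 A]) simp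
    qed
    have sN: "dist ((f ^^ N) (w j)) u < \<eta>" "dist ((f ^^ N) (x j)) v < \<eta>"
      using e1(3) d1(3) by (simp_all add: u_def v_def)
    obtain \<zeta>1 where z1: "\<zeta>1 0 = (f ^^ N) (w j)" "\<zeta>1 M = (f ^^ N) (x j)"
      "\<forall>i<M. dist (f (\<zeta>1 i)) (\<zeta>1 (Suc i)) \<le> 3*g"
      using U[OF uC vC MM0 ph1 sN(1) sN(2)] by blast
    define S where "S = L + T + M0"
    have SN: "S \<ge> N" "N + T \<ge> N" by (simp_all add: S_def L_def)
    obtain d2 where d2: "d2 \<in> C" "int (pm g) dvd ph g dd d2" "dist ((f ^^ (N + T)) (x j)) ((f ^^ (N + T)) d2) < \<eta>"
      using NN[OF SN(2) j] by blast
    obtain e2 where e2: "e2 \<in> C" "int (pm g) dvd ph g ee e2" "dist ((f ^^ S) (w j)) ((f ^^ S) e2) < \<eta>"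
      using NN[OF SN(1) j] by blast
    define a2 where "a2 = (f ^^ (N + T)) d2"
    define b2 where "b2 = (f ^^ S) e2"
    have a2C: "a2 \<in> C" and b2C: "b2 \<in> C" using inv_pow e2(1) d2(1) by (auto simp: a2_def b2_def)
    have ph2: "int (pm g) dvd int M0 - ph g a2 b2"
    proof -
      have Q1: "int (pm g) dvd ph g a2 b2 - (ph g d2 e2 + int S - int (N + T))"
        unfolding a2_def b2_def using ph_shift[OF g(1) d2(1) e2(1)] .
      have R1: "int (pm g) dvd ph g d2 e2 - (ph g d2 dd + ph g dd e2)" using ph_add[OF g(1) d2(1) dd(1) e2(1)] .
      have R2: "int (pm g) dvd ph g dd e2 - (ph g dd ee + ph g ee e2)" using ph_add[OF g(1) dd(1) ee(1) e2(1)] .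
      have R3: "int (pm g) dvd ph g dd d2 + ph g d2 dd" using ph_antisym[OF g(1) dd(1) d2(1)] .
      have R3': "int (pm g) dvd ph g d2 dd" by (rule dl2[where cA=1 and cB="-1", OF R3 d2(2)]) simp
      have Q2: "int (pm g) dvd ph g d2 e2 - ph g dd ee"
        by (rule dl4[where cA=1 and cB=1 and cC=1 and cD=1, OF R1 R2 R3' e2(2)]) simp
      have Q3: "int (pm g) dvd ph g dd ee + r1" unfolding r1_def using ph_antisym[OF g(1) dd(1) ee(1)] .
      show ?thesis
        by (rule dl4[where cA="-1" and cB="-1" and cC="-1" and cD="-1", OF Q1 Q2 Q3 S7]) (simp add: S_def L_def)
    qed
    have sT: "dist ((f ^^ (N + T)) (x j)) a2 < \<eta>" "dist ((f ^^ S) (w j)) b2 < \<eta>"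
      using e2(3) d2(3) by (simp_all add: a2_def b2_def)
    obtain \<zeta>2 where z2: "\<zeta>2 0 = (f ^^ (N + T)) (x j)" "\<zeta>2 M0 = (f ^^ S) (w j)"
      "\<forall>i<M0. dist (f (\<zeta>2 i)) (\<zeta>2 (Suc i)) \<le> 3*g"
      using U[OF a2C b2C order_refl ph2 sT(1) sT(2)] by blast
    define \<psi>4 where "\<psi>4 = (\<lambda>t. (f ^^ (S + t)) (w j))"
    define \<psi>3 where "\<psi>3 = cat \<zeta>2 M0 \<psi>4"
    define \<psi>2 where "\<psi>2 = cat (\<lambda>i. (f ^^ (N + i)) (x j)) T \<psi>3"
    define \<psi>1 where "\<psi>1 = cat \<zeta>1 M \<psi>2"
    define \<xi> where "\<xi> = cat (\<lambda>s. (f ^^ (0 + s)) (w j)) N \<psi>1"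
    have B4: "\<zeta>2 M0 = \<psi>4 0" using z2(2) by (simp add: \<psi>4_def)
    have B3: "(\<lambda>i. (f ^^ (N + i)) (x j)) T = \<psi>3 0" using z2(1) by (simp add: \<psi>3_def)
    have B2: "\<zeta>1 M = \<psi>2 0" using z1(2) by (simp add: \<psi>2_def)
    have B1: "(\<lambda>s. (f ^^ (0 + s)) (w j)) N = \<psi>1 0" using z1(1) by (simp add: \<psi>1_def)
    have E4: "\<forall>i. err f \<psi>4 i \<le> 3*g" "\<forall>i\<ge>0. err f \<psi>4 i = 0"
      using g(1) unfolding \<psi>4_def by (simp_all add: orbit_err)
    have E3: "\<forall>i. err f \<psi>3 i \<le> 3*g" "\<forall>i\<ge>M0 + 0. err f \<psi>3 i = 0"
      unfolding \<psi>3_def using cat_err_bound[where k=M0 and \<xi>=\<zeta>2 and \<zeta>=\<psi>4 and d="3*g" and f=f, OF _ E4(1) B4] cat_err_zero[where k=M0 and \<xi>=\<zeta>2 and \<zeta>=\<psi>4 and f=f, OF E4(2) B4] z2(3)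
      by (simp_all add: err_def)
    have E2: "\<forall>i. err f \<psi>2 i \<le> 3*g" "\<forall>i\<ge>T + (M0 + 0). err f \<psi>2 i = 0"
      unfolding \<psi>2_def using cat_err_bound[where k=T and \<xi>="\<lambda>i. (f ^^ (N + i)) (x j)" and \<zeta>=\<psi>3 and d="3*g" and f=f, OF _ E3(1) B3] cat_err_zero[where k=T and \<xi>="\<lambda>i. (f ^^ (N + i)) (x j)" and \<zeta>=\<psi>3 and f=f, OF E3(2) B3] g(1)
      by (simp_all add: err_def)
    have E1: "\<forall>i. err f \<psi>1 i \<le> 3*g" "\<forall>i\<ge>M + (T + (M0 + 0)). err f \<psi>1 i = 0"
      unfolding \<psi>1_def using cat_err_bound[where k=M and \<xi>=\<zeta>1 and \<zeta>=\<psi>2 and d="3*g" and f=f, OF _ E2(1) B2] cat_err_zero[where k=M and \<xi>=\<zeta>1 and \<zeta>=\<psi>2 and f=f, OF E2(2) B2] z1(3)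
      by (simp_all add: err_def)
    have E0: "\<forall>i. err f \<xi> i \<le> 3*g" "\<forall>i\<ge>N + (M + (T + (M0 + 0))). err f \<xi> i = 0"
      unfolding \<xi>_def using cat_err_bound[where k=N and \<xi>="\<lambda>s. (f ^^ (0 + s)) (w j)" and \<zeta>=\<psi>1 and d="3*g" and f=f, OF _ E1(1) B1] cat_err_zero[where k=N and \<xi>="\<lambda>s. (f ^^ (0 + s)) (w j)" and \<zeta>=\<psi>1 and f=f, OF E1(2) B1] g(1)
      by (simp_all add: err_def)
    have shad1: "\<forall>i. dist (f (\<xi> i)) (\<xi> (Suc i)) \<le> \<delta>" using E0(1) g(2) by (simp add: err_def)
    have "eventually (\<lambda>i. dist (f (\<xi> i)) (\<xi> (Suc i)) = 0) sequentially"
      unfolding eventually_sequentially using E0(2) by (auto simp: err_def)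
    then have shad2: "(\<lambda>i. dist (f (\<xi> i)) (\<xi> (Suc i))) \<longlonglongrightarrow> 0" by (rule tendsto_eventually)
    obtain z where z: "\<forall>i. dist ((f ^^ i) z) (\<xi> i) \<le> \<epsilon>/2" "(\<lambda>i. dist ((f ^^ i) z) (\<xi> i)) \<longlonglongrightarrow> 0"
      using SH[OF conjI[OF shad1 shad2]] by blast
    have xi0: "\<xi> 0 = w j" by (simp add: \<xi>_def)
    have xiL: "\<xi> (L + i) = (f ^^ (N + i)) (x j)" if "i \<le> T" for i
    proof -
      have "\<xi> (N + (M + i)) = \<psi>1 (M + i)" unfolding \<xi>_def using cat_end[of _ N \<psi>1 "M + i"] B1 by simp
      also have "\<dots> = \<psi>2 i" unfolding \<psi>1_def using cat_end[of \<zeta>1 M \<psi>2 i] B2 by simp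
      also have "\<dots> = (f ^^ (N + i)) (x j)" unfolding \<psi>2_def using that by (simp add: cat_le)
      finally show ?thesis by (simp add: L_def add.assoc)
    qed
    have xiS: "\<xi> s = (f ^^ s) (w j)" if "s \<ge> S" for s
    proof -
      define t where "t = s - S"
      have t: "s = N + (M + (T + (M0 + t)))" using that unfolding t_def S_def L_def by simp
      have "\<xi> s = \<psi>1 (M + (T + (M0 + t)))" unfolding \<xi>_def t using cat_end[of _ N \<psi>1] B1 by simp
      also have "\<dots> = \<psi>2 (T + (M0 + t))" unfolding \<psi>1_def using cat_end[of \<zeta>1 M \<psi>2] B2 by simp
      also have "\<dots> = \<psi>3 (M0 + t)" unfolding \<psi>2_def using cat_end[of _ T \<psi>3] B3 by simp
      also have "\<dots> = \<psi>4 t" unfolding \<psi>3_def using cat_end[of \<zeta>2 M0 \<psi>4] B4 by simp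
      also have "\<dots> = (f ^^ s) (w j)" unfolding \<psi>4_def t S_def L_def by (simp add: add.assoc)
      finally show ?thesis .
    qed
    have "eventually (\<lambda>s. dist ((f ^^ s) z) (\<xi> s) = dist ((f ^^ s) z) ((f ^^ s) (w j))) sequentially"
      unfolding eventually_sequentially using xiS by (intro exI[of _ S]) simp
    from Lim_transform_eventually[OF z(2) this]
    have "(\<lambda>s. dist ((f ^^ s) z) ((f ^^ s) (w j))) \<longlonglongrightarrow> 0" .
    then have zV: "z \<in> Vs f C E" using Vs_transfer w j by blast
    have zw: "dist (w j) z \<le> \<epsilon>/2" using z(1)[rule_format, of 0] xi0 by (simp add: dist_commute)
    have "\<forall>i\<le>T. dist ((f ^^ (N + i)) (x j)) ((f ^^ (L + i)) z) \<le> \<epsilon>/2"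
    proof (intro allI impI)
      fix i assume "i \<le> T"
      have "dist ((f ^^ (L + i)) z) (\<xi> (L + i)) \<le> \<epsilon>/2" using z(1) by blast
      then show "dist ((f ^^ (N + i)) (x j)) ((f ^^ (L + i)) z) \<le> \<epsilon>/2"
        using xiL[OF \<open>i \<le> T\<close>] by (simp add: dist_commute)
    qed
    then show "\<exists>z. z \<in> Vs f C E \<and> dist (w j) z \<le> \<epsilon>/2 \<and>
      (\<forall>i\<le>T. dist ((f ^^ (N + i)) (x j)) ((f ^^ (L + i)) z) \<le> \<epsilon>/2)" using zV zw by blast
  qed
  have fin: "\<forall>j\<in>{1..n}. \<exists>l. l \<in> closure (Vs f C E) \<and> dist (y j) l \<le> \<epsilon> \<and>
      (\<forall>i. dist ((f ^^ (N + i)) (x j)) ((f ^^ (L + i)) l) \<le> \<epsilon>)"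
  proof
    fix j assume j: "j \<in> {1..n}"
    have "\<forall>T. \<exists>z. z \<in> Vs f C E \<and> dist (w j) z \<le> \<epsilon>/2 \<and>
      (\<forall>i\<le>T. dist ((f ^^ (N + i)) (x j)) ((f ^^ (L + i)) z) \<le> \<epsilon>/2)" using core j by blast
    from choice[OF this] obtain zs where zs: "\<And>T. zs T \<in> Vs f C E" "\<And>T. dist (w j) (zs T) \<le> \<epsilon>/2"
      "\<And>T i. i \<le> T \<Longrightarrow> dist ((f ^^ (N + i)) (x j)) ((f ^^ (L + i)) (zs T)) \<le> \<epsilon>/2" by blast
    obtain l r where lr: "strict_mono r" "(zs \<circ> r) \<longlonglongrightarrow> l"
      using compact_imp_seq_compact[OF assms(1)] unfolding seq_compact_def by blast
    have "l \<in> closure (Vs f C E)" unfolding closure_sequential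
      using zs(1) lr(2) by (intro exI[of _ "zs \<circ> r"]) simp
    moreover have "dist (y j) l \<le> \<epsilon>"
    proof (rule LIMSEQ_le_const2)
      show "(\<lambda>k. dist (y j) ((zs \<circ> r) k)) \<longlonglongrightarrow> dist (y j) l" by (intro tendsto_intros lr(2))
      have "dist (y j) ((zs \<circ> r) k) \<le> \<epsilon>" for k
      proof -
        have "dist (y j) ((zs \<circ> r) k) \<le> dist (y j) (w j) + dist (w j) ((zs \<circ> r) k)" by (rule dist_triangle)
        moreover have "dist (y j) (w j) < \<epsilon>/2" using w j by (simp add: dist_commute)
        moreover have "dist (w j) ((zs \<circ> r) k) \<le> \<epsilon>/2" using zs(2) by simp
        ultimately show ?thesis by linarith
      qed
      then show "\<exists>K0. \<forall>k\<ge>K0. dist (y j) ((zs \<circ> r) k) \<le> \<epsilon>" by blast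
    qed
    moreover have "dist ((f ^^ (N + i)) (x j)) ((f ^^ (L + i)) l) \<le> \<epsilon>" for i
    proof (rule LIMSEQ_le_const2)
      have "isCont (f ^^ (L + i)) l"
        using cont_funpow[OF assms(2), of "L + i"] continuous_on_eq_continuous_at[OF open_UNIV] by blast
      from isCont_tendsto_compose[OF this lr(2)]
      have "(\<lambda>k. (f ^^ (L + i)) ((zs \<circ> r) k)) \<longlonglongrightarrow> (f ^^ (L + i)) l" .
      then show "(\<lambda>k. dist ((f ^^ (N + i)) (x j)) ((f ^^ (L + i)) ((zs \<circ> r) k))) \<longlonglongrightarrow>
          dist ((f ^^ (N + i)) (x j)) ((f ^^ (L + i)) l)" by (intro tendsto_intros)
      have "dist ((f ^^ (N + i)) (x j)) ((f ^^ (L + i)) ((zs \<circ> r) k)) \<le> \<epsilon>" if "k \<ge> i" for k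
      proof -
        have "i \<le> r k" using seq_suble[OF lr(1), of k] that by simp
        then have "dist ((f ^^ (N + i)) (x j)) ((f ^^ (L + i)) (zs (r k))) \<le> \<epsilon>/2" by (rule zs(3))
        then show ?thesis using assms(10) by simp
      qed
      then show "\<exists>K0. \<forall>k\<ge>K0. dist ((f ^^ (N + i)) (x j)) ((f ^^ (L + i)) ((zs \<circ> r) k)) \<le> \<epsilon>" by blast
    qed
    ultimately show "\<exists>l. l \<in> closure (Vs f C E) \<and> dist (y j) l \<le> \<epsilon> \<and>
      (\<forall>i. dist ((f ^^ (N + i)) (x j)) ((f ^^ (L + i)) l) \<le> \<epsilon>)" by blast
  qed
  from bchoice[OF fin] obtain z where z: "\<forall>j\<in>{1..n}. z j \<in> closure (Vs f C E) \<and> dist (y j) (z j) \<le> \<epsilon> \<and>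
      (\<forall>i. dist ((f ^^ (N + i)) (x j)) ((f ^^ (L + i)) (z j)) \<le> \<epsilon>)" by blast
  show ?thesis
    apply (rule exI[of _ z])
    apply (intro conjI)
     apply (simp add: z)
    apply (rule exI[of _ N], rule exI[of _ L])
    using z by blast
qed


end
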